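(* Assume $p_n\to0$, and let $(k_n)_n\subset\mathbb N$ be a sequence of integers with $k_n\to\infty$ and $k_np_n\to0$ as $n\to\infty$. Then for each $n$ there exists an event $E_n$ (depending on $n,p_n,k_n$), with $\mathbb P(E_n)\to1$ as $n\to\infty$, on which the following hold for the system with clone probability $p=p_n$: (a) $\tau_{k_n}=b_{k_n}^{(p_n)}\le (\ln k_n)^2$; (b) $(1-k_n^{-1/3})k_ne^t\le Z(\tau_{k_n}+t)\le (1+k_n^{-1/3})k_ne^t$ for all $t\ge0$; (c) $(1-3k_n^{-1/3})k_ne^t\le T^{(p_n)}(b_{k_n}^{(p_n)}+t)\le(1+3k_n^{-1/3})k_ne^t$ for all $t\ge0$.
   Context: Let $p\in[0,1]$. Let $Z=(Z(t))_{t\ge0}$ be a standard Yule process: a continuous-time pure birth process started from $Z(0)=1$ in which each individual gives birth at rate $1$. Each newborn child is, independently of everything else, a clone of its parent (same genetic type) with probability $p$, and a mutant carrying a new genetic type with probability $1-p$. The ancestor has type $1$ and the successive mutants receive types $2,3,\dots$ in order of birth. Let $b_1^{(p)}=0$ and, for $i\ge2$, let $b_i^{(p)}$ be the birth time of the first individual of type $i$ (i.e. of the $(i-1)$-th mutant). Let $T^{(p)}(t)=\max\{i: b_i^{(p)}\le t\}$ be the number of distinct types present at time $t$. For $i\in\mathbb N$, $\tau_i=\inf\{t\ge0:Z(t)=i\}$ is the birth time of the $i$-th individual. *)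

theory Defs
  imports "HOL-Probability.Probability"
begin

text \<open>Yule process with clonal/mutant births, built from its jump chain.
  H j (j \<ge> 1) is the holding time in state Z = j (an Exp(j) variable);
  C k (k \<ge> 2) is the clone indicator (1 = clone, 0 = mutant) of the k-th individual.\<close>

definition birth_time :: "(nat \<Rightarrow> real) \<Rightarrow> nat \<Rightarrow> real" where
  "birth_time H k = (\<Sum>j\<in>{1..<k}. H j)"

definition yule_pop :: "(nat \<Rightarrow> real) \<Rightarrow> real \<Rightarrow> nat" where
  "yule_pop H t = card {k. 1 \<le> k \<and> birth_time H k \<le> t}"

text \<open>b_i: birth time of the first individual of type i (b_1 = 0; for i \<ge> 2 the birth
  time of the (i-1)-th mutant; infinity if there is no such mutant).\<close>
definition type_birth :: "(nat \<Rightarrow> real) \<Rightarrow> (nat \<Rightarrow> real) \<Rightarrow> nat \<Rightarrow> ereal" where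
  "type_birth H C i = (if i = 1 then 0 else
     Inf {ereal (birth_time H k) | k. 2 \<le> k \<and> C k = 0 \<and> card {j\<in>{2..k}. C j = 0} = i - 1})"

definition num_types :: "(nat \<Rightarrow> real) \<Rightarrow> (nat \<Rightarrow> real) \<Rightarrow> real \<Rightarrow> nat" where
  "num_types H C t = Max {i. 1 \<le> i \<and> type_birth H C i \<le> ereal t}"

end

theory Submission
  imports Defs "HOL-Probability.Probability"
begin


lemma (in prob_space) indep_restrict_mult_zero:
  fixes X :: "nat \<Rightarrow> 'a \<Rightarrow> real"
  assumes ind: "indep_vars (\<lambda>_. borel) X I" and A: "A \<subseteq> I" "j \<in> I" "j \<notin> A"
    and g: "g \<in> borel_measurable (PiM A (\<lambda>_. borel))"
    and intg: "integrable M (\<lambda>\<omega>. g (restrict (\<lambda>i. X i \<omega>) A))"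
    and intX: "integrable M (X j)" and mean: "expectation (X j) = 0"
  shows "integrable M (\<lambda>\<omega>. g (restrict (\<lambda>i. X i \<omega>) A) * X j \<omega>)"
    "expectation (\<lambda>\<omega>. g (restrict (\<lambda>i. X i \<omega>) A) * X j \<omega>) = 0"
proof -
  have "indep_var borel (g \<circ> (\<lambda>\<omega>. restrict (\<lambda>i. X i \<omega>) A)) borel ((\<lambda>f. f j) \<circ> (\<lambda>\<omega>. restrict (\<lambda>i. X i \<omega>) {j}))"
    by (intro indep_var_compose[OF indep_var_restrict[OF ind]] g) (use A in auto)
  then have iv: "indep_var borel (\<lambda>\<omega>. g (restrict (\<lambda>i. X i \<omega>) A)) borel (X j)" by (simp add: comp_def)
  show "integrable M (\<lambda>\<omega>. g (restrict (\<lambda>i. X i \<omega>) A) * X j \<omega>)"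
    using indep_var_integrable[OF iv intg intX] .
  show "expectation (\<lambda>\<omega>. g (restrict (\<lambda>i. X i \<omega>) A) * X j \<omega>) = 0"
    using indep_var_lebesgue_integral[OF iv intg intX] mean by simp
qed


context prob_space begin

lemma psum_sq:
  fixes X :: "nat \<Rightarrow> 'a \<Rightarrow> real"
  assumes ind: "indep_vars (\<lambda>_. borel) X I" and sub: "{a..<b} \<subseteq> I"
    and meas: "\<And>j. X j \<in> borel_measurable M"
    and sq: "\<And>j. j \<in> {a..<b} \<Longrightarrow> integrable M (\<lambda>\<omega>. X j \<omega> ^ 2)"
    and mean: "\<And>j. j \<in> {a..<b} \<Longrightarrow> expectation (X j) = 0"
  shows "m \<le> b \<Longrightarrow> integrable M (\<lambda>\<omega>. (\<Sum>j\<in>{a..<m}. X j \<omega>) ^ 2) \<and>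
     expectation (\<lambda>\<omega>. (\<Sum>j\<in>{a..<m}. X j \<omega>) ^ 2) = (\<Sum>j\<in>{a..<m}. expectation (\<lambda>\<omega>. X j \<omega> ^ 2))"
proof (induction m)
  case 0
  then show ?case by simp
next
  case (Suc m)
  show ?case
  proof (cases "m < a")
    case True
    then show ?thesis by simp
  next
    case False
    then have ins: "{a..<Suc m} = insert m {a..<m}" by auto
    have mb: "m \<in> {a..<b}" using Suc.prems False by auto
    have IH: "integrable M (\<lambda>\<omega>. (\<Sum>j\<in>{a..<m}. X j \<omega>) ^ 2)"
      "expectation (\<lambda>\<omega>. (\<Sum>j\<in>{a..<m}. X j \<omega>) ^ 2) = (\<Sum>j\<in>{a..<m}. expectation (\<lambda>\<omega>. X j \<omega> ^ 2))"
      using Suc by auto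
    have intX: "integrable M (X j)" if "j \<in> {a..<b}" for j
      using square_integrable_imp_integrable[OF meas sq[OF that]] .
    have intS: "integrable M (\<lambda>\<omega>. \<Sum>j\<in>{a..<m}. X j \<omega>)"
      using intX Suc.prems by (intro Bochner_Integration.integrable_sum) auto
    have g: "(\<lambda>x::nat\<Rightarrow>real. \<Sum>j\<in>{a..<m}. x j) \<in> borel_measurable (PiM {a..<m} (\<lambda>_. borel))"
      by measurable
    have eqg: "(\<lambda>\<omega>. (\<lambda>x. \<Sum>j\<in>{a..<m}. x j) (restrict (\<lambda>i. X i \<omega>) {a..<m})) = (\<lambda>\<omega>. \<Sum>j\<in>{a..<m}. X j \<omega>)"
      by auto
    have subm: "{a..<m} \<subseteq> I" "m \<in> I" using sub mb by auto
    have cross: "integrable M (\<lambda>\<omega>. (\<Sum>j\<in>{a..<m}. X j \<omega>) * X m \<omega>)"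
      "expectation (\<lambda>\<omega>. (\<Sum>j\<in>{a..<m}. X j \<omega>) * X m \<omega>) = 0"
      using indep_restrict_mult_zero[OF ind subm _ g] sub mb intS intX[OF mb] mean[OF mb]
      unfolding eqg by auto
    have expand: "(\<lambda>\<omega>. (\<Sum>j\<in>{a..<Suc m}. X j \<omega>) ^ 2) =
        (\<lambda>\<omega>. (\<Sum>j\<in>{a..<m}. X j \<omega>) ^ 2 + 2 * ((\<Sum>j\<in>{a..<m}. X j \<omega>) * X m \<omega>) + X m \<omega> ^ 2)"
      unfolding ins by (auto simp: power2_eq_square algebra_simps)
    show ?thesis
      unfolding expand using IH cross sq[OF mb] ins
      by (simp add: add.commute)
  qed
qed

end


context prob_space begin

lemma kolmogorov_fin:
  fixes X :: "nat \<Rightarrow> 'a \<Rightarrow> real"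
  assumes ind: "indep_vars (\<lambda>_. borel) X I" and sub: "{a..<b} \<subseteq> I"
    and meas: "\<And>j. X j \<in> borel_measurable M"
    and sq: "\<And>j. j \<in> {a..<b} \<Longrightarrow> integrable M (\<lambda>\<omega>. X j \<omega> ^ 2)"
    and mean: "\<And>j. j \<in> {a..<b} \<Longrightarrow> expectation (X j) = 0"
    and eps: "0 < \<epsilon>"
  shows "prob {\<omega>\<in>space M. \<exists>m\<in>{a..b}. \<epsilon> \<le> \<bar>\<Sum>j\<in>{a..<m}. X j \<omega>\<bar>}
     \<le> (\<Sum>j\<in>{a..<b}. expectation (\<lambda>\<omega>. X j \<omega> ^ 2)) / \<epsilon>\<^sup>2"
proof -
  define S where "S m \<omega> = (\<Sum>j\<in>{a..<m}. X j \<omega>)" for m \<omega>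
  have Smeas[measurable]: "S m \<in> borel_measurable M" for m
    unfolding S_def using meas by measurable
  define A where "A m = {\<omega>\<in>space M. \<epsilon> \<le> \<bar>S m \<omega>\<bar> \<and> (\<forall>i\<in>{a..<m}. \<bar>S i \<omega>\<bar> < \<epsilon>)}" for m
  define E where "E = {\<omega>\<in>space M. \<exists>m\<in>{a..b}. \<epsilon> \<le> \<bar>S m \<omega>\<bar>}"
  have Ameas[measurable]: "A m \<in> sets M" for m unfolding A_def by measurable
  have intA: "integrable M (indicator (A m) :: 'a \<Rightarrow> real)" for m
    by (rule integrable_real_indicator[OF Ameas]) (simp add: less_top[symmetric])
  have Emeas[measurable]: "E \<in> sets M" unfolding E_def by measurable
  have intX: "integrable M (X j)" if "j \<in> {a..<b}" for j
    using square_integrable_imp_integrable[OF meas sq[OF that]] .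
  have intS: "integrable M (S m)" if "m \<le> b" for m
    unfolding S_def using intX that by (intro Bochner_Integration.integrable_sum) auto
  have Sb: "integrable M (\<lambda>\<omega>. S b \<omega> ^ 2)"
     "expectation (\<lambda>\<omega>. S b \<omega> ^ 2) = (\<Sum>j\<in>{a..<b}. expectation (\<lambda>\<omega>. X j \<omega> ^ 2))"
    using psum_sq[OF ind sub meas sq mean order.refl] unfolding S_def by blast+
  have ind_eq: "indicator E \<omega> = (\<Sum>m\<in>{a..b}. indicator (A m) \<omega> :: real)" if \<omega>: "\<omega> \<in> space M" for \<omega>
  proof (cases "\<omega> \<in> E")
    case False
    then have "\<omega> \<notin> A m" if "m \<in> {a..b}" for m using that \<omega> unfolding A_def E_def by auto
    then show ?thesis using False by simp
  next
    case True
    define m0 where "m0 = (LEAST m. m \<in> {a..b} \<and> \<epsilon> \<le> \<bar>S m \<omega>\<bar>)"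
    have ex: "\<exists>m. m \<in> {a..b} \<and> \<epsilon> \<le> \<bar>S m \<omega>\<bar>" using True unfolding E_def by auto
    have m00: "m0 \<in> {a..b} \<and> \<epsilon> \<le> \<bar>S m0 \<omega>\<bar>"
      unfolding m0_def by (rule LeastI_ex[OF ex])
    then have m0: "m0 \<in> {a..b}" "\<epsilon> \<le> \<bar>S m0 \<omega>\<bar>" by auto
    have less: "\<bar>S i \<omega>\<bar> < \<epsilon>" if "i \<in> {a..<m0}" for i
    proof (rule ccontr)
      assume "\<not> \<bar>S i \<omega>\<bar> < \<epsilon>"
      then have "m0 \<le> i" unfolding m0_def using that m0 by (intro Least_le) auto
      then show False using that by auto
    qed
    have "indicator (A m) \<omega> = (if m = m0 then 1 else 0 :: real)" if "m \<in> {a..b}" for m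
    proof (cases "m = m0")
      case True then show ?thesis using m0 less \<omega> by (auto simp: A_def)
    next
      case False
      show ?thesis
      proof (cases "m < m0")
        case True then show ?thesis using that less[of m] \<omega> by (auto simp: A_def)
      next
        case False then have "m0 \<in> {a..<m}" using \<open>m \<noteq> m0\<close> m0 by auto
        then have "\<omega> \<notin> A m" using m0 unfolding A_def by force
        then show ?thesis using \<open>m \<noteq> m0\<close> by simp
      qed
    qed
    then have "(\<Sum>m\<in>{a..b}. indicator (A m) \<omega> :: real) = (\<Sum>m\<in>{a..b}. if m = m0 then 1 else 0)"
      by (intro sum.cong) auto
    also have "\<dots> = 1" using m0 by simp
    finally show ?thesis using True by simp
  qed
  have key: "\<epsilon>\<^sup>2 * prob (A m) \<le> expectation (\<lambda>\<omega>. S b \<omega> ^ 2 * indicator (A m) \<omega>)"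
    if m: "m \<in> {a..b}" for m
  proof -
    define g where "g x = (\<Sum>j\<in>{a..<m}. x j) *
       (if \<epsilon> \<le> \<bar>\<Sum>j\<in>{a..<m}. x j\<bar> \<and> (\<forall>i\<in>{a..<m}. \<bar>\<Sum>j\<in>{a..<i}. x j\<bar> < \<epsilon>) then 1 else 0)"
      for x :: "nat \<Rightarrow> real"
    have gm: "g \<in> borel_measurable (PiM {a..<m} (\<lambda>_. borel))"
      unfolding g_def by measurable
    have Yeq: "g (restrict (\<lambda>i. X i \<omega>) {a..<m}) = S m \<omega> * indicator (A m) \<omega>" if "\<omega> \<in> space M" for \<omega>
    proof -
      have "(\<Sum>j\<in>{a..<i}. restrict (\<lambda>i. X i \<omega>) {a..<m} j) = S i \<omega>" if "i \<le> m" for i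
        unfolding S_def using that by (intro sum.cong) auto
      then show ?thesis using \<open>\<omega> \<in> space M\<close> unfolding g_def A_def
        by (auto simp: indicator_def)
    qed
    have intY: "integrable M (\<lambda>\<omega>. g (restrict (\<lambda>i. X i \<omega>) {a..<m}))"
    proof -
      have "integrable M (\<lambda>\<omega>. S m \<omega> * indicator (A m) \<omega>)"
        using intS[of m] m by (intro integrable_real_mult_indicator) auto
      moreover have "integrable M (\<lambda>\<omega>. g (restrict (\<lambda>i. X i \<omega>) {a..<m})) = integrable M (\<lambda>\<omega>. S m \<omega> * indicator (A m) \<omega>)"
        by (rule Bochner_Integration.integrable_cong) (auto simp: Yeq)
      ultimately show ?thesis by simp
    qed
    have cross: "integrable M (\<lambda>\<omega>. g (restrict (\<lambda>i. X i \<omega>) {a..<m}) * X j \<omega>) \<and>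
          expectation (\<lambda>\<omega>. g (restrict (\<lambda>i. X i \<omega>) {a..<m}) * X j \<omega>) = 0" if "j \<in> {m..<b}" for j
    proof -
      have s: "{a..<m} \<subseteq> I" "j \<in> I" "j \<notin> {a..<m}" and jb: "j \<in> {a..<b}" using sub that m by auto
      show ?thesis using indep_restrict_mult_zero[OF ind s gm intY intX[OF jb] mean[OF jb]]
        by blast
    qed
    define R where "R \<omega> = (\<Sum>j\<in>{m..<b}. X j \<omega>)" for \<omega>
    have SbR: "S b \<omega> = S m \<omega> + R \<omega>" for \<omega>
      unfolding S_def R_def using m by (simp add: sum.atLeastLessThan_concat)
    have crossR: "integrable M (\<lambda>\<omega>. g (restrict (\<lambda>i. X i \<omega>) {a..<m}) * R \<omega>)"
      "expectation (\<lambda>\<omega>. g (restrict (\<lambda>i. X i \<omega>) {a..<m}) * R \<omega>) = 0"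
    proof -
      have e: "(\<lambda>\<omega>. g (restrict (\<lambda>i. X i \<omega>) {a..<m}) * R \<omega>) =
          (\<lambda>\<omega>. \<Sum>j\<in>{m..<b}. g (restrict (\<lambda>i. X i \<omega>) {a..<m}) * X j \<omega>)"
        unfolding R_def by (simp add: sum_distrib_left)
      show "integrable M (\<lambda>\<omega>. g (restrict (\<lambda>i. X i \<omega>) {a..<m}) * R \<omega>)"
        unfolding e using cross by (intro Bochner_Integration.integrable_sum) auto
      show "expectation (\<lambda>\<omega>. g (restrict (\<lambda>i. X i \<omega>) {a..<m}) * R \<omega>) = 0"
        unfolding e using cross by (subst Bochner_Integration.integral_sum) auto
    qed
    have pw: "\<epsilon>\<^sup>2 * indicator (A m) \<omega> + 2 * (g (restrict (\<lambda>i. X i \<omega>) {a..<m}) * R \<omega>)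
         \<le> S b \<omega> ^ 2 * indicator (A m) \<omega>" if "\<omega> \<in> space M" for \<omega>
    proof (cases "\<omega> \<in> A m")
      case True
      then have "\<epsilon> \<le> \<bar>S m \<omega>\<bar>" unfolding A_def by auto
      then have "\<epsilon>\<^sup>2 \<le> (S m \<omega>)\<^sup>2" using eps
        by (metis abs_ge_zero abs_of_pos power2_abs power_mono)
      moreover have "(S m \<omega>)\<^sup>2 + 2 * (S m \<omega> * R \<omega>) \<le> (S m \<omega> + R \<omega>)\<^sup>2"
        by (simp add: power2_eq_square algebra_simps)
      ultimately show ?thesis using True Yeq[OF that] SbR[of \<omega>] by simp
    next
      case False
      then show ?thesis using Yeq[OF that] by simp
    qed
    have "\<epsilon>\<^sup>2 * prob (A m) = expectation (\<lambda>\<omega>. \<epsilon>\<^sup>2 * indicator (A m) \<omega> + 2 * (g (restrict (\<lambda>i. X i \<omega>) {a..<m}) * R \<omega>))"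
    proof -
      have "expectation (\<lambda>\<omega>. \<epsilon>\<^sup>2 * indicator (A m) \<omega> + 2 * (g (restrict (\<lambda>i. X i \<omega>) {a..<m}) * R \<omega>))
        = expectation (\<lambda>\<omega>. \<epsilon>\<^sup>2 * indicator (A m) \<omega>) + expectation (\<lambda>\<omega>. 2 * (g (restrict (\<lambda>i. X i \<omega>) {a..<m}) * R \<omega>))"
        by (rule Bochner_Integration.integral_add) (use crossR intA in auto)
      also have "\<dots> = \<epsilon>\<^sup>2 * prob (A m)"
        using crossR Ameas[of m] by (simp add: integral_indicator Int_absorb2 sets.sets_into_space)
      finally show ?thesis by simp
    qed
    also have "\<dots> \<le> expectation (\<lambda>\<omega>. S b \<omega> ^ 2 * indicator (A m) \<omega>)"
      using pw crossR Sb integrable_real_mult_indicator[OF Ameas Sb(1)] intA[of m]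
      by (intro integral_mono Bochner_Integration.integrable_add integrable_mult_right) auto
    finally show ?thesis .
  qed
  have pE: "prob E = expectation (indicator E :: 'a \<Rightarrow> real)"
    using Emeas by (simp add: integral_indicator Int_absorb2 sets.sets_into_space)
  have pE2: "expectation (indicator E :: 'a \<Rightarrow> real) = expectation (\<lambda>\<omega>. \<Sum>m\<in>{a..b}. indicator (A m) \<omega> :: real)"
    by (rule Bochner_Integration.integral_cong) (auto simp: ind_eq)
  have "\<epsilon>\<^sup>2 * prob E = \<epsilon>\<^sup>2 * expectation (\<lambda>\<omega>. \<Sum>m\<in>{a..b}. indicator (A m) \<omega> :: real)"
    unfolding pE pE2 ..
  also have "\<dots> = (\<Sum>m\<in>{a..b}. \<epsilon>\<^sup>2 * prob (A m))"
    by (subst Bochner_Integration.integral_sum) (auto simp: sum_distrib_left intA)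
  also have "\<dots> \<le> (\<Sum>m\<in>{a..b}. expectation (\<lambda>\<omega>. S b \<omega> ^ 2 * indicator (A m) \<omega>))"
    by (intro sum_mono key)
  also have "\<dots> = expectation (\<lambda>\<omega>. S b \<omega> ^ 2 * (\<Sum>m\<in>{a..b}. indicator (A m) \<omega>))"
    using Sb by (subst Bochner_Integration.integral_sum[symmetric])
      (auto intro: integrable_real_mult_indicator simp: sum_distrib_left)
  also have "\<dots> = expectation (\<lambda>\<omega>. S b \<omega> ^ 2 * indicator E \<omega>)"
    by (intro Bochner_Integration.integral_cong) (auto simp: ind_eq)
  also have "\<dots> \<le> expectation (\<lambda>\<omega>. S b \<omega> ^ 2)"
    using Sb integrable_real_mult_indicator[OF Emeas Sb(1)] by (intro integral_mono) (auto simp: indicator_def)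
  finally have "\<epsilon>\<^sup>2 * prob E \<le> (\<Sum>j\<in>{a..<b}. expectation (\<lambda>\<omega>. X j \<omega> ^ 2))" using Sb by simp
  then show ?thesis unfolding E_def S_def using eps by (simp add: field_simps)
qed

end


context prob_space begin

lemma indep_sets_reindex:
  assumes ind: "indep_sets F (f ` J)" and inj: "inj_on f J"
  shows "indep_sets (\<lambda>j. F (f j)) J"
  unfolding indep_sets_def
proof (intro conjI ballI allI impI)
  fix j assume "j \<in> J"
  then show "F (f j) \<subseteq> events" using ind unfolding indep_sets_def by auto
next
  fix L A assume L: "L \<subseteq> J" "L \<noteq> {}" "finite L" and A: "A \<in> Pi L (\<lambda>j. F (f j))"
  define B where "B i = A (the_inv_into L f i)" for i
  have injL: "inj_on f L" using inj L(1) by (rule inj_on_subset)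
  have BA: "B (f j) = A j" if "j \<in> L" for j
    unfolding B_def using the_inv_into_f_f[OF injL that] by simp
  have "B \<in> Pi (f ` L) F" using A BA by auto
  moreover have "f ` L \<subseteq> f ` J" "f ` L \<noteq> {}" "finite (f ` L)" using L by auto
  ultimately have "prob (\<Inter>i\<in>f ` L. B i) = (\<Prod>i\<in>f ` L. prob (B i))"
    using ind unfolding indep_sets_def by blast
  moreover have "(\<Inter>i\<in>f ` L. B i) = (\<Inter>j\<in>L. A j)" using BA by auto
  moreover have "(\<Prod>i\<in>f ` L. prob (B i)) = (\<Prod>j\<in>L. prob (A j))"
    using BA by (simp add: prod.reindex[OF injL])
  ultimately show "prob (\<Inter>j\<in>L. A j) = (\<Prod>j\<in>L. prob (A j))" by simp
qed

lemma indep_vars_reindex: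
  assumes ind: "indep_vars M' X (f ` J)" and inj: "inj_on f J"
  shows "indep_vars (\<lambda>j. M' (f j)) (\<lambda>j. X (f j)) J"
  using ind unfolding indep_vars_def2
  by (auto intro!: indep_sets_reindex[OF _ inj, where F="\<lambda>i. {X i -` A \<inter> space M |A. A \<in> sets (M' i)}"])

lemma kolmogorov_inf:
  fixes X :: "nat \<Rightarrow> 'a \<Rightarrow> real"
  assumes ind: "indep_vars (\<lambda>_. borel) X I" and sub: "{a..} \<subseteq> I"
    and meas: "\<And>j. X j \<in> borel_measurable M"
    and sq: "\<And>j. a \<le> j \<Longrightarrow> integrable M (\<lambda>\<omega>. X j \<omega> ^ 2)"
    and mean: "\<And>j. a \<le> j \<Longrightarrow> expectation (X j) = 0"
    and eps: "0 < \<epsilon>"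
    and B: "\<And>b. a \<le> b \<Longrightarrow> (\<Sum>j\<in>{a..<b}. expectation (\<lambda>\<omega>. X j \<omega> ^ 2)) \<le> B"
  shows "prob {\<omega>\<in>space M. \<exists>m\<ge>a. \<epsilon> \<le> \<bar>\<Sum>j\<in>{a..<m}. X j \<omega>\<bar>} \<le> B / \<epsilon>\<^sup>2"
proof -
  define F where "F b = {\<omega>\<in>space M. \<exists>m\<in>{a..b}. \<epsilon> \<le> \<bar>\<Sum>j\<in>{a..<m}. X j \<omega>\<bar>}" for b
  have Fm: "F b \<in> events" for b unfolding F_def using meas by measurable
  have inc: "incseq F" unfolding incseq_def F_def by force
  have U: "(\<Union>b. F b) = {\<omega>\<in>space M. \<exists>m\<ge>a. \<epsilon> \<le> \<bar>\<Sum>j\<in>{a..<m}. X j \<omega>\<bar>}"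
    unfolding F_def by force
  have lim: "(\<lambda>b. prob (F b)) \<longlonglongrightarrow> prob (\<Union>b. F b)"
    using Fm inc by (intro finite_Lim_measure_incseq) auto
  have B0: "0 \<le> B" using B[of a] by simp
  have bnd: "prob (F b) \<le> B / \<epsilon>\<^sup>2" for b
  proof (cases "a \<le> b")
    case True
    have "prob (F b) \<le> (\<Sum>j\<in>{a..<b}. expectation (\<lambda>\<omega>. X j \<omega> ^ 2)) / \<epsilon>\<^sup>2"
      unfolding F_def using sub
      by (intro kolmogorov_fin[OF ind _ meas sq mean eps]) auto
    also have "\<dots> \<le> B / \<epsilon>\<^sup>2" using B[OF True] by (simp add: divide_right_mono)
    finally show ?thesis .
  next
    case False
    then have "F b = {}" unfolding F_def by auto
    then show ?thesis using B0 by simp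
  qed
  have "prob (\<Union>b. F b) \<le> B / \<epsilon>\<^sup>2"
    using lim bnd by (intro LIMSEQ_le_const2) auto
  then show ?thesis unfolding U .
qed

end


lemma harm_lower:
  assumes "1 \<le> K" "K \<le> m"
  shows "ln (real m) - ln (real K) \<le> (\<Sum>j\<in>{K..<m}. 1 / real j)"
  using assms(2)
proof (induction m rule: dec_induct)
  case base then show ?case by simp
next
  case (step m)
  have m1: "1 \<le> real m" using assms step by simp
  have e: "1 + 1 / real m = real (Suc m) / real m" using m1 by (simp add: field_simps)
  have "ln (real (Suc m)) - ln (real m) = ln (1 + 1 / real m)"
    unfolding e using m1 by (simp add: ln_div)
  also have "\<dots> \<le> 1 / real m" by (rule ln_add_one_self_le_self) simp
  finally show ?case using step by simp
qed

lemma harm_upper: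
  assumes "2 \<le> K" "K \<le> m"
  shows "(\<Sum>j\<in>{K..<m}. 1 / real j) \<le> ln (real m - 1) - ln (real K - 1)"
  using assms(2)
proof (induction m rule: dec_induct)
  case base then show ?case by simp
next
  case (step m)
  have m1: "2 \<le> real m" using assms step by simp
  have "1 / real m \<le> ln (real m) - ln (real m - 1)"
  proof -
    have "ln ((real m - 1) / real m) \<le> (real m - 1) / real m - 1"
      using m1 by (intro ln_le_minus_one) auto
    also have "\<dots> = - (1 / real m)" using m1 by (simp add: field_simps)
    finally show ?thesis using m1 by (simp add: ln_div)
  qed
  then show ?case using step by simp
qed

lemma harm_upper2:
  assumes "2 \<le> K" "K \<le> m"
  shows "(\<Sum>j\<in>{K..<m}. 1 / real j) \<le> ln (real m) - ln (real K) + 1 / (real K - 1)"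
proof -
  have K2: "2 \<le> real K" using assms by simp
  have "ln (real m - 1) \<le> ln (real m)" using K2 assms by simp
  moreover have "ln (real K) - ln (real K - 1) \<le> 1 / (real K - 1)"
  proof -
    have "ln (real K / (real K - 1)) \<le> real K / (real K - 1) - 1"
      using K2 by (intro ln_le_minus_one) auto
    also have "\<dots> = 1 / (real K - 1)" using K2 by (simp add: field_simps)
    finally show ?thesis using K2 by (simp add: ln_div)
  qed
  ultimately show ?thesis using harm_upper[OF assms] by linarith
qed

lemma inv_sq_sum:
  assumes "2 \<le> a"
  shows "(\<Sum>j\<in>{a..<b}. 1 / (real j)\<^sup>2) \<le> 1 / (real a - 1)"
proof -
  have "(\<Sum>j\<in>{a..<b}. 1 / (real j)\<^sup>2) \<le> (\<Sum>j\<in>{a..<b}. 1 / (real j - 1) - 1 / real j)"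
  proof (intro sum_mono)
    fix j assume "j \<in> {a..<b}"
    then have j: "2 \<le> real j" using assms by auto
    then show "1 / (real j)\<^sup>2 \<le> 1 / (real j - 1) - 1 / real j"
      by (simp add: field_simps power2_eq_square)
  qed
  also have "\<dots> \<le> 1 / (real a - 1)"
  proof (cases "a \<le> b")
    case True
    have "(\<Sum>j\<in>{a..<b}. 1 / (real j - 1) - 1 / real j) = 1 / (real a - 1) - 1 / (real b - 1)"
      using True
    proof (induction b rule: dec_induct)
      case base then show ?case by simp
    next
      case (step b) then show ?case by simp
    qed
    also have "\<dots> \<le> 1 / (real a - 1)" using True assms by simp
    finally show ?thesis .
  next
    case False then show ?thesis using assms by simp
  qed
  finally show ?thesis .
qed


lemma u_facts:
  fixes K :: nat and u :: real
  assumes K: "8 \<le> K" and u: "u = real K powr (-1/3)"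
  shows "0 < u" "u \<le> 1/2" "4 \<le> real K * u"
proof -
  have Kp: "real K > 0" using K by simp
  have u3: "u ^ 3 = 1 / real K"
  proof -
    have "u ^ 3 = real K powr (-1/3 * 3)" unfolding u using Kp by (simp add: powr_realpow[symmetric] powr_powr)
    also have "\<dots> = 1 / real K" using Kp by (simp add: powr_minus_divide)
    finally show ?thesis .
  qed
  show up: "0 < u" unfolding u using Kp by simp
  show "u \<le> 1/2"
  proof (rule ccontr)
    assume "\<not> u \<le> 1/2"
    then have "(1/2::real) ^ 3 < u ^ 3" by (intro power_strict_mono) auto
    then have "1/8 < 1 / real K" using u3 by (simp add: power3_eq_cube)
    moreover have "1 / real K \<le> 1/8" using K by (simp add: field_simps)
    ultimately show False by simp
  qed
  show "4 \<le> real K * u"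
  proof (rule ccontr)
    assume "\<not> 4 \<le> real K * u"
    then have "(real K * u) ^ 3 < 4 ^ 3" using up Kp by (intro power_strict_mono) auto
    moreover have "(real K * u) ^ 3 = real K ^ 2"
      using u3 Kp by (simp add: power_mult_distrib power3_eq_cube power2_eq_square field_simps)
    moreover have "(64::real) \<le> real K ^ 2"
    proof -
      have "(8::real)^2 \<le> real K ^ 2" using K by (intro power_mono) auto
      then show ?thesis by simp
    qed
    ultimately show False by simp
  qed
qed

lemma bt_mono:
  assumes h0: "\<And>j. 1 \<le> j \<Longrightarrow> 0 \<le> h j" and "i \<le> j"
  shows "birth_time h i \<le> birth_time h j"
  unfolding birth_time_def using assms by (intro sum_mono2) auto

lemma bt_split:
  assumes "1 \<le> K" "K \<le> m"
  shows "birth_time h m = birth_time h K + (\<Sum>j\<in>{K..<m}. h j)"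
  unfolding birth_time_def using assms by (simp add: sum.atLeastLessThan_concat)

lemma zbounds:
  fixes h :: "nat \<Rightarrow> real" and K :: nat and u t :: real
  assumes K: "8 \<le> K" and u: "u = real K powr (-1/3)"
    and h0: "\<And>j. 1 \<le> j \<Longrightarrow> 0 \<le> h j"
    and G3: "\<And>m. K \<le> m \<Longrightarrow> \<bar>\<Sum>j\<in>{K..<m}. (h j - 1 / real j)\<bar> < u / 4"
    and t: "0 \<le> t"
  defines "s \<equiv> birth_time h K + t"
  shows "finite {m. 1 \<le> m \<and> birth_time h m \<le> s}"
    "real (card {m. 1 \<le> m \<and> birth_time h m \<le> s}) \<le> (1 + u) * real K * exp t"
    "\<exists>m0\<ge>K. {1..m0} \<subseteq> {m. 1 \<le> m \<and> birth_time h m \<le> s} \<and> (1 - u) * real K * exp t \<le> real m0"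
proof -
  note uf = u_facts[OF K u]
  have K1: "1 \<le> K" and K2: "2 \<le> K" using K by auto
  have Kr: "8 \<le> real K" using K by simp
  define Z where "Z = {m. 1 \<le> m \<and> birth_time h m \<le> s}"
  have sumh: "(\<Sum>j\<in>{K..<m}. h j) = (\<Sum>j\<in>{K..<m}. 1 / real j) + (\<Sum>j\<in>{K..<m}. (h j - 1 / real j))" for m
    by (simp add: sum_subtractf)
  define B where "B = real K * exp (t + u / 4)"
  have inB: "real m \<le> B" if "m \<in> Z" for m
  proof (cases "m \<le> K")
    case True
    have "1 \<le> exp (t + u / 4)" using uf t by simp
    then have "real K \<le> B" unfolding B_def using Kr by (simp add: mult_le_cancel_left1)
    then show ?thesis using True by simp
  next
    case False
    then have Km: "K \<le> m" by simp
    have "birth_time h m \<le> s" using that unfolding Z_def by simp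
    then have "(\<Sum>j\<in>{K..<m}. h j) \<le> t" using bt_split[OF K1 Km, of h] unfolding s_def by simp
    moreover have "ln (real m) - ln (real K) \<le> (\<Sum>j\<in>{K..<m}. 1 / real j)" by (rule harm_lower[OF K1 Km])
    moreover have "- (u/4) < (\<Sum>j\<in>{K..<m}. (h j - 1 / real j))" using G3[OF Km] by linarith
    ultimately have "ln (real m) < ln (real K) + (t + u / 4)" using sumh[of m] by linarith
    then have "exp (ln (real m)) < exp (ln (real K) + (t + u / 4))" by simp
    then show ?thesis using Km K1 unfolding B_def by (simp add: exp_add)
  qed
  have Zsub: "Z \<subseteq> {1..nat \<lfloor>B\<rfloor>}"
  proof
    fix m assume "m \<in> Z"
    then have "real m \<le> B" "1 \<le> m" using inB unfolding Z_def by auto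
    then show "m \<in> {1..nat \<lfloor>B\<rfloor>}" by (simp add: le_nat_floor)
  qed
  show "finite {m. 1 \<le> m \<and> birth_time h m \<le> s}"
    using finite_subset[OF Zsub] unfolding Z_def by simp
  have "real (card Z) \<le> real (nat \<lfloor>B\<rfloor>)" using card_mono[OF _ Zsub] by simp
  also have "\<dots> \<le> B" using uf by (simp add: B_def)
  also have "\<dots> \<le> (1 + u) * real K * exp t"
  proof -
    have "exp (u/4) \<le> 1 + u/4 + (u/4)\<^sup>2" using uf by (intro exp_bound) auto
    also have "\<dots> \<le> 1 + u" using uf by (simp add: power2_eq_square field_simps)
    finally have "exp (u/4) \<le> 1 + u" .
    then have "real K * exp t * exp (u/4) \<le> real K * exp t * (1 + u)" using Kr
      by (intro mult_left_mono) auto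
    then show ?thesis unfolding B_def by (simp add: exp_add mult_ac)
  qed
  finally show "real (card {m. 1 \<le> m \<and> birth_time h m \<le> s}) \<le> (1 + u) * real K * exp t"
    unfolding Z_def .
  define \<delta> where "\<delta> = u / 4 + 1 / (real K - 1)"
  define r where "r = real K * exp (t - \<delta>)"
  define m0 where "m0 = max K (nat \<lfloor>r\<rfloor>)"
  have r0: "0 \<le> r" unfolding r_def by simp
  have m0K: "K \<le> m0" unfolding m0_def by simp
  have Tm0: "birth_time h m0 \<le> s"
  proof (cases "nat \<lfloor>r\<rfloor> \<le> K")
    case True then have "m0 = K" unfolding m0_def by simp
    then show ?thesis unfolding s_def using t by simp
  next
    case False
    then have m0r: "m0 = nat \<lfloor>r\<rfloor>" unfolding m0_def by simp
    have "real m0 \<le> r" unfolding m0r using r0 by simp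
    have m0pos: "0 < real m0" using m0K K by simp
    have "ln (real m0) \<le> ln r" using \<open>real m0 \<le> r\<close> m0pos by simp
    also have "\<dots> = ln (real K) + (t - \<delta>)" unfolding r_def using K by (simp add: ln_mult)
    finally have l: "ln (real m0) \<le> ln (real K) + (t - \<delta>)" .
    have "(\<Sum>j\<in>{K..<m0}. 1 / real j) \<le> ln (real m0) - ln (real K) + 1 / (real K - 1)"
      by (rule harm_upper2[OF K2 m0K])
    moreover have "(\<Sum>j\<in>{K..<m0}. (h j - 1 / real j)) < u/4" using G3[OF m0K] by linarith
    ultimately have "(\<Sum>j\<in>{K..<m0}. h j) \<le> t" using sumh[of m0] l unfolding \<delta>_def by linarith
    then show ?thesis using bt_split[OF K1 m0K, of h] unfolding s_def by simp
  qed
  have sub: "{1..m0} \<subseteq> Z"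
  proof
    fix m assume "m \<in> {1..m0}"
    then have "birth_time h m \<le> birth_time h m0" using h0 by (intro bt_mono) auto
    then show "m \<in> Z" using Tm0 \<open>m \<in> {1..m0}\<close> unfolding Z_def by auto
  qed
  have "r - 1 \<le> real m0"
  proof -
    have "r - 1 \<le> real (nat \<lfloor>r\<rfloor>)" using r0 by linarith
    then show ?thesis unfolding m0_def by simp
  qed
  moreover have "(1 - u) * real K * exp t \<le> r - 1"
  proof -
    have d1: "1 - \<delta> \<le> exp (- \<delta>)" by (rule exp_minus_ge)
    have "r = real K * exp t * exp (- \<delta>)" unfolding r_def by (simp add: exp_diff exp_minus field_simps)
    then have "real K * exp t * (1 - \<delta>) \<le> r" using d1 Kr by (simp add: mult_left_mono)
    moreover have "1 \<le> real K * exp t * (u - \<delta>)"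
    proof -
      have Kd: "real K / (real K - 1) \<le> 8/7" using Kr by (simp add: field_simps)
      have "real K * (u - \<delta>) = 3/4 * (real K * u) - real K / (real K - 1)"
        unfolding \<delta>_def using Kr by (simp add: field_simps)
      also have "\<dots> \<ge> 1" using uf(3) Kd by linarith
      finally have a: "1 \<le> real K * (u - \<delta>)" .
      have "1 \<le> exp t" using t by simp
      then have "real K * (u - \<delta>) \<le> real K * (u - \<delta>) * exp t" using a by (simp add: mult_le_cancel_left1)
      then show ?thesis using a by (simp add: mult_ac)
    qed
    ultimately show ?thesis by (simp add: algebra_simps)
  qed
  ultimately show "\<exists>m0\<ge>K. {1..m0} \<subseteq> {m. 1 \<le> m \<and> birth_time h m \<le> s} \<and> (1 - u) * real K * exp t \<le> real m0"
    using m0K sub unfolding Z_def by auto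
qed


definition mutc :: "(nat \<Rightarrow> real) \<Rightarrow> nat \<Rightarrow> nat" where
  "mutc c m = card {j\<in>{2..m}. c j = 0}"

lemma type_birth_alt:
  "i \<noteq> 1 \<Longrightarrow> type_birth h c i = Inf {ereal (birth_time h k) | k. 2 \<le> k \<and> c k = 0 \<and> mutc c k = i - 1}"
  unfolding type_birth_def mutc_def by simp

lemma mutc_le: "mutc c m \<le> m - 1"
proof -
  have "mutc c m \<le> card {2..m}" unfolding mutc_def by (intro card_mono) auto
  then show ?thesis by simp
qed

lemma mutc_strict:
  assumes "c k2 = 0" "2 \<le> k2" "k1 < k2"
  shows "mutc c k1 < mutc c k2"
proof -
  have "k2 \<in> {j\<in>{2..k2}. c j = 0}" "k2 \<notin> {j\<in>{2..k1}. c j = 0}" using assms by auto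
  moreover have "{j\<in>{2..k1}. c j = 0} \<subseteq> {j\<in>{2..k2}. c j = 0}" using assms by auto
  ultimately have "{j\<in>{2..k1}. c j = 0} \<subset> {j\<in>{2..k2}. c j = 0}" by blast
  then show ?thesis unfolding mutc_def by (intro psubset_card_mono) auto
qed

lemma mutc_clones:
  assumes c01: "\<And>j. 2 \<le> j \<Longrightarrow> c j = 0 \<or> c j = 1"
  shows "real (mutc c m) + (\<Sum>j\<in>{2..m}. c j) = real m - 1 \<or> m < 2"
proof (cases "m < 2")
  case True then show ?thesis by simp
next
  case False
  have "(\<Sum>j\<in>{2..m}. c j) = (\<Sum>j\<in>{2..m}. if c j \<noteq> 0 then 1 else 0)"
    using c01 by (intro sum.cong) auto
  also have "\<dots> = real (card ({2..m} \<inter> {j. c j \<noteq> 0}))"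
    by (simp add: sum.If_cases)
  also have "{2..m} \<inter> {j. c j \<noteq> 0} = {j\<in>{2..m}. c j \<noteq> 0}" by auto
  finally have s: "(\<Sum>j\<in>{2..m}. c j) = real (card {j\<in>{2..m}. c j \<noteq> 0})" .
  have "{2..m} = {j\<in>{2..m}. c j = 0} \<union> {j\<in>{2..m}. c j \<noteq> 0}" by auto
  then have e1: "card {2..m} = card ({j\<in>{2..m}. c j = 0} \<union> {j\<in>{2..m}. c j \<noteq> 0})"
    by (rule arg_cong)
  have "card ({j\<in>{2..m}. c j = 0} \<union> {j\<in>{2..m}. c j \<noteq> 0}) = card {j\<in>{2..m}. c j = 0} + card {j\<in>{2..m}. c j \<noteq> 0}"
    by (rule card_Un_disjoint) auto
  then have "card {2..m} = card {j\<in>{2..m}. c j = 0} + card {j\<in>{2..m}. c j \<noteq> 0}"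
    using e1 by simp
  then show ?thesis using s False unfolding mutc_def by simp
qed

lemma det_main:
  fixes h c :: "nat \<Rightarrow> real" and K :: nat and u :: real
  assumes K: "8 \<le> K" and u: "u = real K powr (-1/3)"
    and h0: "\<And>j. 1 \<le> j \<Longrightarrow> 0 \<le> h j"
    and c01: "\<And>j. 2 \<le> j \<Longrightarrow> c j = 0 \<or> c j = 1"
    and c0: "\<And>j. j \<in> {2..K} \<Longrightarrow> c j = 0"
    and G3: "\<And>m. K \<le> m \<Longrightarrow> \<bar>\<Sum>j\<in>{K..<m}. (h j - 1 / real j)\<bar> < u / 4"
    and G4: "\<And>m. K \<le> m \<Longrightarrow> (\<Sum>j\<in>{2..m}. c j) \<le> u * real m"
  shows "ereal (birth_time h K) = type_birth h c K"
    "\<forall>t\<ge>0. (1 - u) * real K * exp t \<le> real (yule_pop h (birth_time h K + t))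
        \<and> real (yule_pop h (birth_time h K + t)) \<le> (1 + u) * real K * exp t"
    "\<forall>t\<ge>0. (1 - 3 * u) * real K * exp t
          \<le> real (num_types h c (real_of_ereal (type_birth h c K) + t))
        \<and> real (num_types h c (real_of_ereal (type_birth h c K) + t)) \<le> (1 + 3 * u) * real K * exp t"
proof -
  note uf = u_facts[OF K u]
  have K1: "1 \<le> K" and K2: "2 \<le> K" using K by auto
  have mutK: "mutc c K = K - 1"
  proof -
    have "{j\<in>{2..K}. c j = 0} = {2..K}" using c0 by auto
    then show ?thesis unfolding mutc_def by simp
  qed
  show tbK: "ereal (birth_time h K) = type_birth h c K"
  proof -
    have KK: "K \<noteq> 1" using K by simp
    let ?S = "{ereal (birth_time h k) | k. 2 \<le> k \<and> c k = 0 \<and> mutc c k = K - 1}"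
    have "ereal (birth_time h K) \<in> ?S" using K2 c0[of K] mutK by auto
    then have le1: "Inf ?S \<le> ereal (birth_time h K)" by (rule Inf_lower)
    have le2: "ereal (birth_time h K) \<le> Inf ?S"
    proof (rule Inf_greatest)
      fix x assume "x \<in> ?S"
      then obtain k where k: "x = ereal (birth_time h k)" "2 \<le> k" "c k = 0" "mutc c k = K - 1" by auto
      have "K \<le> k"
      proof (rule ccontr)
        assume "\<not> K \<le> k"
        then have "mutc c k \<le> k - 1" "k - 1 < K - 1" using mutc_le[of c k] k by auto
        then show False using k by simp
      qed
      then show "ereal (birth_time h K) \<le> x" using k h0 bt_mono by auto
    qed
    show ?thesis unfolding type_birth_alt[OF KK] using le1 le2 by (rule antisym[rotated])
  qed
  have TB: "real_of_ereal (type_birth h c K) = birth_time h K" using tbK[symmetric] by simp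
  have main: "(1 - u) * real K * exp t \<le> real (yule_pop h (birth_time h K + t))
        \<and> real (yule_pop h (birth_time h K + t)) \<le> (1 + u) * real K * exp t
      \<and> (1 - 3 * u) * real K * exp t
          \<le> real (num_types h c (birth_time h K + t))
        \<and> real (num_types h c (birth_time h K + t)) \<le> (1 + 3 * u) * real K * exp t"
    if t: "0 \<le> t" for t
  proof -
    define s where "s = birth_time h K + t"
    define Z where "Z = {m. 1 \<le> m \<and> birth_time h m \<le> s}"
    note zb = zbounds[OF K u h0 G3 t]
    have Zfin: "finite Z" using zb(1) unfolding Z_def s_def .
    have Zup: "real (card Z) \<le> (1 + u) * real K * exp t" using zb(2) unfolding Z_def s_def .
    obtain m0 where m0K: "K \<le> m0" and m0Z: "{1..m0} \<subseteq> Z" and m0lo: "(1 - u) * real K * exp t \<le> real m0"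
      using zb(3) unfolding Z_def s_def by blast
    have m0N: "m0 \<le> card Z" using card_mono[OF Zfin m0Z] by simp
    have yp: "yule_pop h s = card Z" unfolding yule_pop_def Z_def ..
    have "0 \<le> birth_time h K" unfolding birth_time_def using h0 by (auto intro: sum_nonneg)
    then have s0: "0 \<le> s" unfolding s_def using t by simp
    have downZ: "k \<le> card Z" if "k \<in> Z" for k
    proof -
      have "{1..k} \<subseteq> Z"
      proof
        fix m assume m: "m \<in> {1..k}"
        then have "birth_time h m \<le> birth_time h k" using h0 by (intro bt_mono) auto
        then show "m \<in> Z" using that m unfolding Z_def by auto
      qed
      from card_mono[OF Zfin this] show ?thesis by simp
    qed
    define NS where "NS = {i. 1 \<le> i \<and> type_birth h c i \<le> ereal s}"
    have NSsub: "NS \<subseteq> {1..card Z}"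
    proof
      fix i assume iNS: "i \<in> NS"
      show "i \<in> {1..card Z}"
      proof (cases "i = 1")
        case True then show ?thesis using m0N m0K K by auto
      next
        case False
        let ?S = "{ereal (birth_time h k) | k. 2 \<le> k \<and> c k = 0 \<and> mutc c k = i - 1}"
        have le: "Inf ?S \<le> ereal s" using iNS type_birth_alt[OF False] unfolding NS_def by simp
        have "?S \<noteq> {}"
        proof
          assume e: "?S = {}"
          have "Inf ({}::ereal set) \<le> ereal s" using le unfolding e .
          then show False by (simp add: top_ereal_def)
        qed
        then obtain k where k: "2 \<le> k" "c k = 0" "mutc c k = i - 1" by auto
        have "?S = {ereal (birth_time h k)}"
        proof (intro set_eqI iffI)
          fix x assume "x \<in> ?S"
          then obtain k' where k': "x = ereal (birth_time h k')" "2 \<le> k'" "c k' = 0" "mutc c k' = i - 1" by auto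
          have "k' = k"
          proof (rule ccontr)
            assume "k' \<noteq> k"
            then have "k' < k \<or> k < k'" by auto
            then show False using mutc_strict[of c k k'] mutc_strict[of c k' k] k k' by auto
          qed
          then show "x \<in> {ereal (birth_time h k)}" using k' by simp
        next
          fix x assume "x \<in> {ereal (birth_time h k)}"
          then show "x \<in> ?S" using k by auto
        qed
        then have "birth_time h k \<le> s" using le by simp
        then have "k \<in> Z" using k unfolding Z_def by simp
        then have "k \<le> card Z" by (rule downZ)
        moreover have "i - 1 \<le> k - 1" using mutc_le[of c k] k by simp
        ultimately show ?thesis using iNS k(1) unfolding NS_def by auto
      qed
    qed
    have NSfin: "finite NS" using finite_subset[OF NSsub] by simp
    have tnum: "num_types h c s = Max NS" unfolding num_types_def NS_def ..
    have "1 \<in> NS" unfolding NS_def type_birth_def using s0 by simp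
    then have "Max NS \<le> card Z" using NSsub NSfin by (intro Max.boundedI) auto
    then have r1: "real (num_types h c s) \<le> real (card Z)" unfolding tnum by (rule of_nat_mono)
    have KE: "0 \<le> real K * exp t" by simp
    have "(1 + 3 * u) * real K * exp t - (1 + u) * real K * exp t = (2 * u) * (real K * exp t)"
      by (simp add: algebra_simps)
    moreover have "0 \<le> (2 * u) * (real K * exp t)" using uf KE by simp
    ultimately have Tup: "real (num_types h c s) \<le> (1 + 3 * u) * real K * exp t"
      using Zup r1 by linarith
    define Q where "Q = {j\<in>{2..m0}. c j = 0}"
    have KQ: "K \<in> Q" unfolding Q_def using K2 m0K c0[of K] by auto
    have Qfin: "finite Q" unfolding Q_def by simp
    define ks where "ks = Max Q"
    have ksQ: "ks \<in> Q" unfolding ks_def using KQ Qfin by (intro Max_in) auto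
    have geQ: "j \<le> ks" if "j \<in> Q" for j unfolding ks_def using Qfin that by simp
    have mut_ks: "mutc c ks = mutc c m0"
    proof -
      have "{j\<in>{2..ks}. c j = 0} = Q" using ksQ geQ unfolding Q_def by auto
      then show ?thesis unfolding mutc_def Q_def by simp
    qed
    have mut_pos: "1 \<le> mutc c m0"
    proof -
      have "0 < card Q" using KQ Qfin by (auto simp: card_gt_0_iff)
      then show ?thesis unfolding mutc_def Q_def by simp
    qed
    define i0 where "i0 = mutc c m0 + 1"
    have i0NS: "i0 \<in> NS"
    proof -
      have i01: "i0 \<noteq> 1" unfolding i0_def using mut_pos by simp
      let ?S = "{ereal (birth_time h k) | k. 2 \<le> k \<and> c k = 0 \<and> mutc c k = i0 - 1}"
      have "m0 \<in> {1..m0}" using m0K K by auto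
      then have "m0 \<in> Z" using m0Z by blast
      then have bm0: "birth_time h m0 \<le> s" unfolding Z_def by simp
      have "ereal (birth_time h ks) \<in> ?S" using ksQ mut_ks unfolding Q_def i0_def by auto
      then have "Inf ?S \<le> ereal (birth_time h ks)" by (rule Inf_lower)
      also have "birth_time h ks \<le> birth_time h m0" using ksQ h0 unfolding Q_def by (intro bt_mono) auto
      finally have "Inf ?S \<le> ereal s" using bm0 by (meson ereal_less_eq(3) order_trans)
      then have "type_birth h c i0 \<le> ereal s" using type_birth_alt[OF i01] by simp
      then show ?thesis unfolding NS_def i0_def by simp
    qed
    have "i0 \<le> Max NS" using NSfin i0NS by simp
    then have "real i0 \<le> real (Max NS)" by (rule of_nat_mono)
    moreover have "real i0 = real m0 - (\<Sum>j\<in>{2..m0}. c j)"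
      using mutc_clones[of c m0, OF c01] m0K K unfolding i0_def by auto
    moreover have "(\<Sum>j\<in>{2..m0}. c j) \<le> u * real m0" using G4[OF m0K] .
    moreover have "(1 - 3 * u) * real K * exp t \<le> (1 - u) * real m0"
    proof -
      have "(1 - 3 * u) \<le> (1 - u) * (1 - u)" using uf by (simp add: algebra_simps power2_eq_square)
      then have "(1 - 3 * u) * (real K * exp t) \<le> (1 - u) * (1 - u) * (real K * exp t)"
        by (intro mult_right_mono) auto
      also have "\<dots> \<le> (1 - u) * real m0" using m0lo uf by (simp add: mult_left_mono mult.assoc)
      finally show ?thesis by (simp add: mult.assoc)
    qed
    ultimately have Tlo: "(1 - 3 * u) * real K * exp t \<le> real (num_types h c s)"
      unfolding tnum by (simp add: algebra_simps)
    have "real m0 \<le> real (card Z)" using m0N by (rule of_nat_mono)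
    then show ?thesis using Tup Tlo Zup m0lo yp unfolding s_def
      by simp
  qed
  show "\<forall>t\<ge>0. (1 - u) * real K * exp t \<le> real (yule_pop h (birth_time h K + t))
        \<and> real (yule_pop h (birth_time h K + t)) \<le> (1 + u) * real K * exp t"
    using main by blast
  show "\<forall>t\<ge>0. (1 - 3 * u) * real K * exp t
          \<le> real (num_types h c (real_of_ereal (type_birth h c K) + t))
        \<and> real (num_types h c (real_of_ereal (type_birth h c K) + t)) \<le> (1 + 3 * u) * real K * exp t"
    unfolding TB using main by blast
qed


locale yule_setup = prob_space +
  fixes H C :: "nat \<Rightarrow> 'a \<Rightarrow> real" and p :: real and K :: nat
  assumes p01: "0 \<le> p" "p \<le> 1"
    and indep: "indep_vars (\<lambda>_. borel) (\<lambda>i. case i of Inl j \<Rightarrow> H j | Inr j \<Rightarrow> C j)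
                  (Inl ` {1..} \<union> Inr ` {2..})"
    and hold_exp: "\<And>j. 1 \<le> j \<Longrightarrow> distributed M lborel (H j) (exponential_density (real j))"
    and clone_vals: "\<And>j \<omega>. 2 \<le> j \<Longrightarrow> \<omega> \<in> space M \<Longrightarrow> C j \<omega> \<in> {0, 1}"
    and clone_prob: "\<And>j. 2 \<le> j \<Longrightarrow> prob {\<omega> \<in> space M. C j \<omega> = 1} = p"
    and K8: "8 \<le> K" and lnK: "3 \<le> ln (real K)" and Kp: "real K * p \<le> 1/4"
begin

definition "H' j \<omega> = (if 1 \<le> j then H j \<omega> else 0)"
definition "C' j \<omega> = (if 2 \<le> j then C j \<omega> else 0)"
definition "X j \<omega> = (if 1 \<le> j then H j \<omega> - 1 / real j else 0)"
definition "Y j \<omega> = (if 2 \<le> j then C j \<omega> - p else 0)"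

lemma Hm: "1 \<le> j \<Longrightarrow> H j \<in> borel_measurable M"
proof -
  assume j: "1 \<le> j"
  have "H j \<in> measurable M lborel" by (rule distributed_measurable[OF hold_exp[OF j]])
  then show ?thesis by simp
qed

lemma Cm: "2 \<le> j \<Longrightarrow> C j \<in> borel_measurable M"
proof -
  assume j: "2 \<le> j"
  have "Inr j \<in> Inl ` {1..} \<union> Inr ` {2..}" using j by auto
  then have "random_variable borel ((\<lambda>i. case i of Inl j \<Rightarrow> H j | Inr j \<Rightarrow> C j) (Inr j))"
    using indep unfolding indep_vars_def by blast
  then show ?thesis by simp
qed

lemma H'm[measurable]: "H' j \<in> borel_measurable M"
  unfolding H'_def by (cases "1 \<le> j") (auto simp: Hm)
lemma C'm[measurable]: "C' j \<in> borel_measurable M"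
  unfolding C'_def by (cases "2 \<le> j") (auto simp: Cm)
lemma Xm[measurable]: "X j \<in> borel_measurable M"
proof (cases "1 \<le> j")
  case True
  then have [measurable]: "H j \<in> borel_measurable M" by (rule Hm)
  show ?thesis unfolding X_def using True by simp
next
  case False
  then have "X j = (\<lambda>_. 0)" unfolding X_def by (simp add: fun_eq_iff)
  then show ?thesis by simp
qed
lemma Ym[measurable]: "Y j \<in> borel_measurable M"
proof (cases "2 \<le> j")
  case True
  then have [measurable]: "C j \<in> borel_measurable M" by (rule Cm)
  show ?thesis unfolding Y_def using True by simp
next
  case False
  then have "Y j = (\<lambda>_. 0)" unfolding Y_def by (simp add: fun_eq_iff)
  then show ?thesis by simp
qed

lemma ind_H: "indep_vars (\<lambda>_. borel) H {1..}"
proof -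
  have "indep_vars (\<lambda>_. borel) (\<lambda>i. case i of Inl j \<Rightarrow> H j | Inr j \<Rightarrow> C j) (Inl ` {1..})"
    by (rule indep_vars_subset[OF indep]) auto
  from indep_vars_reindex[OF this] show ?thesis by (simp add: inj_on_def)
qed

lemma ind_C: "indep_vars (\<lambda>_. borel) C {2..}"
proof -
  have "indep_vars (\<lambda>_. borel) (\<lambda>i. case i of Inl j \<Rightarrow> H j | Inr j \<Rightarrow> C j) (Inr ` {2..})"
    by (rule indep_vars_subset[OF indep]) auto
  from indep_vars_reindex[OF this] show ?thesis by (simp add: inj_on_def)
qed

lemma ind_X: "indep_vars (\<lambda>_. borel) X {1..}"
proof -
  have "indep_vars (\<lambda>_. borel) (\<lambda>j \<omega>. (\<lambda>x. x - 1 / real j) (H j \<omega>)) {1..}"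
    by (rule indep_vars_compose2[OF ind_H]) auto
  then show ?thesis by (rule indep_vars_cong[THEN iffD1, rotated 3]) (auto simp: X_def fun_eq_iff Hm)
qed

lemma ind_Y: "indep_vars (\<lambda>_. borel) Y {2..}"
proof -
  have "indep_vars (\<lambda>_. borel) (\<lambda>j \<omega>. (\<lambda>x. x - p) (C j \<omega>)) {2..}"
    by (rule indep_vars_compose2[OF ind_C]) auto
  then show ?thesis by (rule indep_vars_cong[THEN iffD1, rotated 3]) (auto simp: Y_def fun_eq_iff Cm)
qed

lemma X_moments:
  assumes j: "1 \<le> j"
  shows "integrable M (\<lambda>\<omega>. X j \<omega> ^ 2)" "expectation (\<lambda>\<omega>. X j \<omega> ^ 2) = 1 / (real j)\<^sup>2"
    "expectation (X j) = 0"
proof -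
  have jp: "0 < real j" using j by simp
  note D = hold_exp[OF j]
  have i1: "integrable M (H j)" using erlang_ith_moment_integrable[OF jp D, of 1] by simp
  have i2: "integrable M (\<lambda>x. (H j x)\<^sup>2)" using erlang_ith_moment_integrable[OF jp D, of 2] by simp
  have E1: "expectation (H j) = 1 / real j" using exponential_distributed_expectation[OF jp D] .
  have V: "variance (H j) = 1 / (real j)\<^sup>2" using exponential_distributed_variance[OF jp D] .
  have Xe: "X j = (\<lambda>\<omega>. H j \<omega> - 1 / real j)" using j unfolding X_def by auto
  have "(\<lambda>\<omega>. X j \<omega> ^ 2) = (\<lambda>\<omega>. (H j \<omega>)\<^sup>2 - 2 * (1 / real j) * H j \<omega> + (1 / real j)\<^sup>2)"
    unfolding Xe by (simp add: power2_diff fun_eq_iff)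
  then show "integrable M (\<lambda>\<omega>. X j \<omega> ^ 2)" using i1 i2 by simp
  show "expectation (\<lambda>\<omega>. X j \<omega> ^ 2) = 1 / (real j)\<^sup>2" unfolding Xe using V E1 by simp
  show "expectation (X j) = 0" unfolding Xe using i1 E1 by (simp add: prob_space)
qed

lemma Y_moments:
  assumes j: "2 \<le> j"
  shows "integrable M (\<lambda>\<omega>. Y j \<omega> ^ 2)" "expectation (\<lambda>\<omega>. Y j \<omega> ^ 2) \<le> p"
    "expectation (Y j) = 0"
proof -
  define A where "A = {\<omega> \<in> space M. C j \<omega> = 1}"
  have Am: "A \<in> events" unfolding A_def using Cm[OF j] by measurable
  have CA: "C j \<omega> = indicator A \<omega>" if "\<omega> \<in> space M" for \<omega>
    using clone_vals[OF j that] that unfolding A_def by auto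
  have iA: "integrable M (indicator A :: 'a \<Rightarrow> real)"
    by (rule integrable_real_indicator[OF Am]) (simp add: less_top[symmetric])
  have EA: "expectation (indicator A :: 'a \<Rightarrow> real) = p"
    using clone_prob[OF j] Am unfolding A_def[symmetric]
    by (simp add: integral_indicator Int_absorb2 sets.sets_into_space)
  have Ye: "Y j \<omega> = indicator A \<omega> - p" if "\<omega> \<in> space M" for \<omega>
    using j CA[OF that] unfolding Y_def by simp
  have Y2e: "Y j \<omega> ^ 2 = (1 - 2 * p) * indicator A \<omega> + p\<^sup>2" if "\<omega> \<in> space M" for \<omega>
    unfolding Ye[OF that] by (cases "\<omega> \<in> A") (simp_all add: power2_eq_square algebra_simps)
  have "integrable M (\<lambda>\<omega>. (1 - 2 * p) * indicator A \<omega> + p\<^sup>2)" using iA by simp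
  then show "integrable M (\<lambda>\<omega>. Y j \<omega> ^ 2)"
    by (rule Bochner_Integration.integrable_cong[THEN iffD1, rotated 2]) (auto simp: Y2e)
  have "expectation (\<lambda>\<omega>. Y j \<omega> ^ 2) = expectation (\<lambda>\<omega>. (1 - 2 * p) * indicator A \<omega> + p\<^sup>2)"
    by (rule Bochner_Integration.integral_cong) (auto simp: Y2e)
  also have "\<dots> = (1 - 2 * p) * p + p\<^sup>2" using iA EA by (simp add: prob_space)
  also have "\<dots> \<le> p" by (simp add: power2_eq_square algebra_simps)
  finally show "expectation (\<lambda>\<omega>. Y j \<omega> ^ 2) \<le> p" .
  have "expectation (Y j) = expectation (\<lambda>\<omega>. indicator A \<omega> - p)"
    by (rule Bochner_Integration.integral_cong) (auto simp: Ye)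
  also have "\<dots> = 0" using iA EA by (simp add: prob_space)
  finally show "expectation (Y j) = 0" .
qed

end


context yule_setup begin

definition "u = real K powr (-1/3)"

lemma uf: "0 < u" "u \<le> 1/2" "4 \<le> real K * u"
  using u_facts[OF K8 u_def] by auto

lemma u3: "u ^ 3 = 1 / real K"
proof -
  have Kp: "real K > 0" using K8 by simp
  have "u ^ 3 = real K powr (-1/3 * 3)" unfolding u_def using Kp by (simp add: powr_realpow[symmetric] powr_powr)
  also have "\<dots> = 1 / real K" using Kp by (simp add: powr_minus_divide)
  finally show ?thesis .
qed

lemma bad0: "prob {\<omega>\<in>space M. \<not>(\<forall>j. 1 \<le> j \<longrightarrow> 0 \<le> H' j \<omega>)} = 0"
proof -
  define N where "N j = {\<omega>\<in>space M. 1 \<le> j \<and> H' j \<omega> < 0}" for j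
  have Nm: "N j \<in> events" for j unfolding N_def by measurable
  have N0: "prob (N j) = 0" for j
  proof (cases "1 \<le> j")
    case True
    have jp: "0 < real j" using True by simp
    have "N j \<subseteq> {\<omega>\<in>space M. H j \<omega> \<le> 0}" unfolding N_def H'_def using True by auto
    moreover have "{\<omega>\<in>space M. H j \<omega> \<le> 0} \<in> events" using Hm[OF True] by measurable
    ultimately have "prob (N j) \<le> prob {\<omega>\<in>space M. H j \<omega> \<le> 0}" by (intro finite_measure_mono)
    also have "\<dots> = 0" using exponential_distributedD_le[OF hold_exp[OF True] order.refl jp] by simp
    finally show ?thesis using measure_nonneg[of M "N j"] by linarith
  next
    case False then have "N j = {}" unfolding N_def by auto
    then show ?thesis by simp
  qed
  have "prob (\<Union>j. N j) \<le> (\<Sum>j. prob (N j))"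
    using Nm N0 by (intro finite_measure_subadditive_countably) auto
  moreover have "0 \<le> prob (\<Union>j. N j)" by simp
  moreover have "(\<Sum>j. prob (N j)) = 0" using N0 by simp
  ultimately have "prob (\<Union>j. N j) = 0" by linarith
  moreover have "{\<omega>\<in>space M. \<not>(\<forall>j. 1 \<le> j \<longrightarrow> 0 \<le> H' j \<omega>)} = (\<Union>j. N j)"
    unfolding N_def by auto
  ultimately show ?thesis by simp
qed

lemma Cev: "2 \<le> j \<Longrightarrow> {\<omega>\<in>space M. C j \<omega> = 1} \<in> events"
proof -
  assume "2 \<le> j"
  then have [measurable]: "C j \<in> borel_measurable M" by (rule Cm)
  show ?thesis by measurable
qed

lemma bad1: "prob {\<omega>\<in>space M. \<not>(\<forall>j\<in>{2..K}. C' j \<omega> = 0)} \<le> (real K - 1) * p"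
proof -
  have "{\<omega>\<in>space M. \<not>(\<forall>j\<in>{2..K}. C' j \<omega> = 0)} = (\<Union>j\<in>{2..K}. {\<omega>\<in>space M. C j \<omega> = 1})"
    using clone_vals unfolding C'_def by fastforce
  moreover have "prob (\<Union>j\<in>{2..K}. {\<omega>\<in>space M. C j \<omega> = 1}) \<le> (\<Sum>j\<in>{2..K}. prob {\<omega>\<in>space M. C j \<omega> = 1})"
    by (intro measure_UNION_le) (auto intro: Cev)
  moreover have "(\<Sum>j\<in>{2..K}. prob {\<omega>\<in>space M. C j \<omega> = 1}) = (real K - 1) * p"
    using clone_prob K8 by (simp add: of_nat_diff)
  ultimately show ?thesis by simp
qed

lemma bad2: "prob {\<omega>\<in>space M. \<not> birth_time (\<lambda>j. H' j \<omega>) K \<le> (ln (real K))\<^sup>2}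
     \<le> 2 / ((ln (real K))\<^sup>2 - 1 - ln (real K))\<^sup>2"
proof -
  define c where "c = (ln (real K))\<^sup>2 - 1 - ln (real K)"
  have c0: "0 < c"
  proof -
    have "3 * ln (real K) \<le> ln (real K) * ln (real K)" using lnK by (intro mult_right_mono) auto
    then show ?thesis unfolding c_def power2_eq_square using lnK by linarith
  qed
  have K1: "1 \<le> K" and K2: "2 \<le> K" using K8 by auto
  have harm: "(\<Sum>j\<in>{1..<K}. 1 / real j) \<le> 1 + ln (real K)"
  proof -
    have e: "{1..<K} = insert 1 {2..<K}" using K2 by auto
    have "(\<Sum>j\<in>{2..<K}. 1 / real j) \<le> ln (real K - 1) - ln (real 2 - 1)"
      by (rule harm_upper) (use K2 in auto)
    also have "\<dots> \<le> ln (real K)" using K2 by simp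
    finally show ?thesis unfolding e by simp
  qed
  have sub: "{\<omega>\<in>space M. \<not> birth_time (\<lambda>j. H' j \<omega>) K \<le> (ln (real K))\<^sup>2}
      \<subseteq> {\<omega>\<in>space M. \<exists>m\<in>{1..K}. c \<le> \<bar>\<Sum>j\<in>{1..<m}. X j \<omega>\<bar>}"
  proof safe
    fix \<omega> assume \<omega>: "\<omega> \<in> space M" and b: "\<not> birth_time (\<lambda>j. H' j \<omega>) K \<le> (ln (real K))\<^sup>2"
    have "(\<Sum>j\<in>{1..<K}. X j \<omega>) = birth_time (\<lambda>j. H' j \<omega>) K - (\<Sum>j\<in>{1..<K}. 1 / real j)"
      unfolding birth_time_def X_def H'_def by (simp add: sum_subtractf[symmetric])
    then have "c \<le> \<bar>\<Sum>j\<in>{1..<K}. X j \<omega>\<bar>" using b harm unfolding c_def by linarith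
    then show "\<exists>m\<in>{1..K}. c \<le> \<bar>\<Sum>j\<in>{1..<m}. X j \<omega>\<bar>" using K1 by auto
  qed
  have "prob {\<omega>\<in>space M. \<not> birth_time (\<lambda>j. H' j \<omega>) K \<le> (ln (real K))\<^sup>2}
      \<le> prob {\<omega>\<in>space M. \<exists>m\<in>{1..K}. c \<le> \<bar>\<Sum>j\<in>{1..<m}. X j \<omega>\<bar>}"
    by (intro finite_measure_mono[OF sub]) measurable
  also have "\<dots> \<le> (\<Sum>j\<in>{1..<K}. expectation (\<lambda>\<omega>. X j \<omega> ^ 2)) / c\<^sup>2"
    by (rule kolmogorov_fin[OF ind_X _ Xm X_moments(1) X_moments(3) c0]) auto
  also have "(\<Sum>j\<in>{1..<K}. expectation (\<lambda>\<omega>. X j \<omega> ^ 2)) = (\<Sum>j\<in>{1..<K}. 1 / (real j)\<^sup>2)"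
    by (intro sum.cong) (auto simp: X_moments(2))
  also have "(\<Sum>j\<in>{1..<K}. 1 / (real j)\<^sup>2) \<le> 2"
  proof -
    have e: "{1..<K} = insert 1 {2..<K}" using K2 by auto
    have "(\<Sum>j\<in>{2..<K}. 1 / (real j)\<^sup>2) \<le> 1 / (real 2 - 1)" by (rule inv_sq_sum) simp
    then show ?thesis unfolding e by simp
  qed
  finally show ?thesis unfolding c_def using c0 unfolding c_def by (simp add: divide_right_mono)
qed

lemma bad3: "prob {\<omega>\<in>space M. \<not>(\<forall>m\<ge>K. \<bar>\<Sum>j\<in>{K..<m}. X j \<omega>\<bar> < u / 4)} \<le> 16 / (u\<^sup>2 * (real K - 1))"
proof -
  have K2: "2 \<le> K" using K8 by auto
  have e: "{\<omega>\<in>space M. \<not>(\<forall>m\<ge>K. \<bar>\<Sum>j\<in>{K..<m}. X j \<omega>\<bar> < u / 4)}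
     = {\<omega>\<in>space M. \<exists>m\<ge>K. u / 4 \<le> \<bar>\<Sum>j\<in>{K..<m}. X j \<omega>\<bar>}" by (auto simp: not_less)
  have "prob {\<omega>\<in>space M. \<exists>m\<ge>K. u / 4 \<le> \<bar>\<Sum>j\<in>{K..<m}. X j \<omega>\<bar>} \<le> (1 / (real K - 1)) / (u / 4)\<^sup>2"
  proof (rule kolmogorov_inf[OF ind_X _ Xm])
    show "{K..} \<subseteq> {1..}" using K2 by auto
    show "\<And>j. K \<le> j \<Longrightarrow> integrable M (\<lambda>\<omega>. (X j \<omega>)\<^sup>2)" using K2 by (intro X_moments) auto
    show "\<And>j. K \<le> j \<Longrightarrow> expectation (X j) = 0" using K2 by (intro X_moments) auto
    show "0 < u / 4" using uf by simp
    fix b assume "K \<le> b"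
    have "(\<Sum>j\<in>{K..<b}. expectation (\<lambda>\<omega>. (X j \<omega>)\<^sup>2)) = (\<Sum>j\<in>{K..<b}. 1 / (real j)\<^sup>2)"
      using K2 by (intro sum.cong) (auto simp: X_moments(2))
    also have "\<dots> \<le> 1 / (real K - 1)" by (rule inv_sq_sum[OF K2])
    finally show "(\<Sum>j\<in>{K..<b}. expectation (\<lambda>\<omega>. (X j \<omega>)\<^sup>2)) \<le> 1 / (real K - 1)" .
  qed
  also have "(1 / (real K - 1)) / (u / 4)\<^sup>2 = 16 / (u\<^sup>2 * (real K - 1))"
    by (simp add: field_simps power2_eq_square)
  finally show ?thesis unfolding e .
qed

end


context yule_setup begin

lemma p_le_u: "4 * p \<le> u"
proof -
  have Kp0: "0 < real K" using K8 by simp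
  have "u ^ 3 \<le> u"
  proof -
    have "u ^ 2 \<le> 1" using uf by (simp add: power_le_one)
    then have "u * u ^ 2 \<le> u * 1" using uf by (intro mult_left_mono) auto
    then show ?thesis by (simp add: power3_eq_cube power2_eq_square)
  qed
  then have "1 / real K \<le> u" using u3 by simp
  moreover have "4 * p \<le> 1 / real K" using Kp Kp0 by (simp add: field_simps)
  ultimately show ?thesis by simp
qed

lemma u2K: "u\<^sup>2 * real K = 1 / u"
proof -
  have "u ^ 3 * real K = 1" using u3 K8 by simp
  then show ?thesis using uf by (simp add: field_simps power3_eq_cube power2_eq_square)
qed

lemma bad4: "prob {\<omega>\<in>space M. \<not>(\<forall>m\<ge>K. (\<Sum>j\<in>{2..m}. C' j \<omega>) \<le> u * real m)} \<le> 8 * p"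
proof -
  have K2: "2 \<le> K" using K8 by auto
  define N where "N i = K * 2 ^ (i + 1)" for i :: nat
  define Bad where "Bad i = {\<omega>\<in>space M. \<exists>m\<in>{2..N i + 1}. u * real K * 2 ^ i / 2 \<le> \<bar>\<Sum>j\<in>{2..<m}. Y j \<omega>\<bar>}" for i
  have Bm: "Bad i \<in> events" for i unfolding Bad_def by measurable
  define c where "c = 8 * p / (u\<^sup>2 * real K)"
  have c0: "0 \<le> c" unfolding c_def using p01 by simp
  have pB: "prob (Bad i) \<le> c * (1/2) ^ i" for i
  proof -
    have eps: "0 < u * real K * 2 ^ i / 2" using uf K8 by simp
    have "prob (Bad i) \<le> (\<Sum>j\<in>{2..<N i + 1}. expectation (\<lambda>\<omega>. Y j \<omega> ^ 2)) / (u * real K * 2 ^ i / 2)\<^sup>2"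
      unfolding Bad_def by (rule kolmogorov_fin[OF ind_Y _ Ym Y_moments(1) Y_moments(3) eps]) auto
    also have "(\<Sum>j\<in>{2..<N i + 1}. expectation (\<lambda>\<omega>. Y j \<omega> ^ 2)) \<le> (\<Sum>j\<in>{2..<N i + 1}. p)"
      by (intro sum_mono Y_moments(2)) auto
    also have "\<dots> \<le> real (N i) * p" using p01 by (simp add: mult_right_mono)
    also have "real (N i) = 2 * real K * 2 ^ i" unfolding N_def by simp
    finally have "prob (Bad i) \<le> 2 * real K * 2 ^ i * p / (u * real K * 2 ^ i / 2)\<^sup>2"
      by (simp add: divide_right_mono)
    also have "\<dots> = c * (1/2) ^ i"
      unfolding c_def using uf K8 by (simp add: field_simps power2_eq_square power_one_over)
    finally show ?thesis .
  qed
  have summ: "summable (\<lambda>i. c * (1/2::real) ^ i)" by (intro summable_mult summable_geometric) simp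
  have summB: "summable (\<lambda>i. prob (Bad i))"
    by (rule summable_comparison_test[OF _ summ]) (use pB in auto)
  have sub: "{\<omega>\<in>space M. \<not>(\<forall>m\<ge>K. (\<Sum>j\<in>{2..m}. C' j \<omega>) \<le> u * real m)} \<subseteq> (\<Union>i. Bad i)"
  proof (rule subsetI)
    fix \<omega> assume "\<omega> \<in> {\<omega>\<in>space M. \<not>(\<forall>m\<ge>K. (\<Sum>j\<in>{2..m}. C' j \<omega>) \<le> u * real m)}"
    then obtain m where \<omega>: "\<omega> \<in> space M" and m: "K \<le> m" and big: "\<not> (\<Sum>j\<in>{2..m}. C' j \<omega>) \<le> u * real m" by auto
    have ex: "\<exists>i. m < K * 2 ^ (i + 1)"
    proof -
      have "m < 2 ^ m" by (rule less_exp)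
      also have "\<dots> \<le> K * 2 ^ (m + 1)" using K8 by simp
      finally show ?thesis by blast
    qed
    define i where "i = (LEAST i. m < K * 2 ^ (i + 1))"
    have mN: "m < N i" unfolding N_def i_def by (rule LeastI_ex[OF ex])
    have Nm: "K * 2 ^ i \<le> m"
    proof (cases i)
      case 0 then show ?thesis using m by simp
    next
      case (Suc i')
      have "\<not> m < K * 2 ^ (i' + 1)"
      proof
        assume "m < K * 2 ^ (i' + 1)"
        then have "i \<le> i'" unfolding i_def by (rule Least_le)
        then show False using Suc by simp
      qed
      then show ?thesis using Suc by simp
    qed
    have C'nn: "0 \<le> C' j \<omega>" for j using clone_vals[of j \<omega>] \<omega> unfolding C'_def by auto
    have "(\<Sum>j\<in>{2..m}. C' j \<omega>) \<le> (\<Sum>j\<in>{2..N i}. C' j \<omega>)"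
      using mN C'nn by (intro sum_mono2) auto
    moreover have "(\<Sum>j\<in>{2..<N i + 1}. Y j \<omega>) = (\<Sum>j\<in>{2..N i}. C' j \<omega>) - real (N i - 1) * p"
    proof -
      have "(\<Sum>j\<in>{2..<N i + 1}. Y j \<omega>) = (\<Sum>j\<in>{2..N i}. C' j \<omega> - p)"
        by (intro sum.cong) (auto simp: Y_def C'_def)
      then show ?thesis by (simp add: sum_subtractf)
    qed
    moreover have "real (N i - 1) * p \<le> real (N i) * p" using p01 by (intro mult_right_mono) auto
    moreover have "real (N i) * p \<le> u * real K * 2 ^ i / 2"
    proof -
      have "real (N i) * p = real K * 2 ^ i * (2 * p)" unfolding N_def by simp
      also have "\<dots> \<le> real K * 2 ^ i * (u / 2)" using p_le_u by (intro mult_left_mono) auto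
      also have "\<dots> = u * real K * 2 ^ i / 2" by simp
      finally show ?thesis .
    qed
    moreover have "u * real K * 2 ^ i \<le> u * real m"
    proof -
      have "real K * 2 ^ i \<le> real m" using Nm by (metis of_nat_le_iff of_nat_mult of_nat_numeral of_nat_power)
      then show ?thesis using uf by (simp add: mult.assoc mult_left_mono)
    qed
    ultimately have "u * real K * 2 ^ i / 2 \<le> \<bar>\<Sum>j\<in>{2..<N i + 1}. Y j \<omega>\<bar>" using big by linarith
    moreover have "N i + 1 \<in> {2..N i + 1}" using K2 unfolding N_def by simp
    ultimately show "\<omega> \<in> (\<Union>i. Bad i)" unfolding Bad_def using \<omega> by blast
  qed
  have "prob {\<omega>\<in>space M. \<not>(\<forall>m\<ge>K. (\<Sum>j\<in>{2..m}. C' j \<omega>) \<le> u * real m)} \<le> prob (\<Union>i. Bad i)"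
    using Bm by (intro finite_measure_mono[OF sub]) auto
  also have "\<dots> \<le> (\<Sum>i. prob (Bad i))"
    using Bm summB by (intro finite_measure_subadditive_countably) auto
  also have "\<dots> \<le> (\<Sum>i. c * (1/2) ^ i)" using summB summ pB by (intro suminf_le) auto
  also have "\<dots> = 2 * c"
  proof -
    have g: "summable (\<lambda>i. (1/2::real) ^ i)" by (rule summable_geometric) simp
    have "(\<Sum>i. c * (1/2::real) ^ i) = c * (\<Sum>i. (1/2::real) ^ i)" by (rule suminf_mult[OF g])
    also have "(\<Sum>i. (1/2::real) ^ i) = 2" using suminf_geometric[of "1/2::real"] by simp
    finally show ?thesis by simp
  qed
  also have "\<dots> \<le> 8 * p"
  proof -
    have "2 * c = 16 * p * u" unfolding c_def u2K using uf by (simp add: field_simps)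
    also have "\<dots> \<le> 16 * p * (1/2)" using uf p01 by (intro mult_left_mono) auto
    finally show ?thesis by simp
  qed
  finally show ?thesis .
qed

end


context yule_setup begin

lemma good_event:
  "\<exists>E\<in>events. (\<forall>\<omega>\<in>E.
       ereal (birth_time (\<lambda>j. H j \<omega>) K) = type_birth (\<lambda>j. H j \<omega>) (\<lambda>j. C j \<omega>) K
     \<and> birth_time (\<lambda>j. H j \<omega>) K \<le> (ln (real K))\<^sup>2
     \<and> (\<forall>t\<ge>0.
          (1 - real K powr (-1/3)) * real K * exp t
            \<le> real (yule_pop (\<lambda>j. H j \<omega>) (birth_time (\<lambda>j. H j \<omega>) K + t))
        \<and> real (yule_pop (\<lambda>j. H j \<omega>) (birth_time (\<lambda>j. H j \<omega>) K + t))
            \<le> (1 + real K powr (-1/3)) * real K * exp t)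
     \<and> (\<forall>t\<ge>0.
          (1 - 3 * real K powr (-1/3)) * real K * exp t
            \<le> real (num_types (\<lambda>j. H j \<omega>) (\<lambda>j. C j \<omega>)
                     (real_of_ereal (type_birth (\<lambda>j. H j \<omega>) (\<lambda>j. C j \<omega>) K) + t))
        \<and> real (num_types (\<lambda>j. H j \<omega>) (\<lambda>j. C j \<omega>)
                     (real_of_ereal (type_birth (\<lambda>j. H j \<omega>) (\<lambda>j. C j \<omega>) K) + t))
            \<le> (1 + 3 * real K powr (-1/3)) * real K * exp t))
   \<and> 1 - (real K * p + 2 / (ln (real K))\<^sup>2 + 32 * real K powr (-1/3) + 8 * p) \<le> prob E"
proof -
  have K1: "1 \<le> K" and K2: "2 \<le> K" using K8 by auto
  define P0 where "P0 \<omega> \<longleftrightarrow> (\<forall>j. 1 \<le> j \<longrightarrow> 0 \<le> H' j \<omega>)" for \<omega>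
  define P1 where "P1 \<omega> \<longleftrightarrow> (\<forall>j\<in>{2..K}. C' j \<omega> = 0)" for \<omega>
  define P2 where "P2 \<omega> \<longleftrightarrow> birth_time (\<lambda>j. H' j \<omega>) K \<le> (ln (real K))\<^sup>2" for \<omega>
  define P3 where "P3 \<omega> \<longleftrightarrow> (\<forall>m\<ge>K. \<bar>\<Sum>j\<in>{K..<m}. X j \<omega>\<bar> < u / 4)" for \<omega>
  define P4 where "P4 \<omega> \<longleftrightarrow> (\<forall>m\<ge>K. (\<Sum>j\<in>{2..m}. C' j \<omega>) \<le> u * real m)" for \<omega>
  define E where "E = {\<omega>\<in>space M. P0 \<omega> \<and> P1 \<omega> \<and> P2 \<omega> \<and> P3 \<omega> \<and> P4 \<omega>}"
  have Em: "E \<in> events" unfolding E_def P0_def P1_def P2_def P3_def P4_def birth_time_def by measurable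
  have B0m: "{\<omega>\<in>space M. \<not> P0 \<omega>} \<in> events" unfolding P0_def by measurable
  have B1m: "{\<omega>\<in>space M. \<not> P1 \<omega>} \<in> events" unfolding P1_def by measurable
  have B2m: "{\<omega>\<in>space M. \<not> P2 \<omega>} \<in> events" unfolding P2_def birth_time_def by measurable
  have B3m: "{\<omega>\<in>space M. \<not> P3 \<omega>} \<in> events" unfolding P3_def by measurable
  have B4m: "{\<omega>\<in>space M. \<not> P4 \<omega>} \<in> events" unfolding P4_def by measurable
  have SE: "space M - E = {\<omega>\<in>space M. \<not> P0 \<omega>} \<union> {\<omega>\<in>space M. \<not> P1 \<omega>} \<union> {\<omega>\<in>space M. \<not> P2 \<omega>}
      \<union> {\<omega>\<in>space M. \<not> P3 \<omega>} \<union> {\<omega>\<in>space M. \<not> P4 \<omega>}" unfolding E_def by auto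
  have "prob (space M - E) \<le> prob {\<omega>\<in>space M. \<not> P0 \<omega>} + prob {\<omega>\<in>space M. \<not> P1 \<omega>}
      + prob {\<omega>\<in>space M. \<not> P2 \<omega>} + prob {\<omega>\<in>space M. \<not> P3 \<omega>} + prob {\<omega>\<in>space M. \<not> P4 \<omega>}"
  proof -
    let ?B0 = "{\<omega>\<in>space M. \<not> P0 \<omega>}" and ?B1 = "{\<omega>\<in>space M. \<not> P1 \<omega>}"
      and ?B2 = "{\<omega>\<in>space M. \<not> P2 \<omega>}" and ?B3 = "{\<omega>\<in>space M. \<not> P3 \<omega>}"
      and ?B4 = "{\<omega>\<in>space M. \<not> P4 \<omega>}"
    have u1: "prob (?B0 \<union> ?B1) \<le> prob ?B0 + prob ?B1" by (rule measure_Un_le[OF B0m B1m])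
    have u2: "prob (?B0 \<union> ?B1 \<union> ?B2) \<le> prob (?B0 \<union> ?B1) + prob ?B2"
      by (rule measure_Un_le) (use B0m B1m B2m in auto)
    have u3: "prob (?B0 \<union> ?B1 \<union> ?B2 \<union> ?B3) \<le> prob (?B0 \<union> ?B1 \<union> ?B2) + prob ?B3"
      by (rule measure_Un_le) (use B0m B1m B2m B3m in auto)
    have u4: "prob (?B0 \<union> ?B1 \<union> ?B2 \<union> ?B3 \<union> ?B4) \<le> prob (?B0 \<union> ?B1 \<union> ?B2 \<union> ?B3) + prob ?B4"
      by (rule measure_Un_le) (use B0m B1m B2m B3m B4m in auto)
    show ?thesis unfolding SE using u1 u2 u3 u4 by linarith
  qed
  also have "\<dots> \<le> 0 + (real K - 1) * p + 2 / ((ln (real K))\<^sup>2 - 1 - ln (real K))\<^sup>2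
          + 16 / (u\<^sup>2 * (real K - 1)) + 8 * p"
    using bad0 bad1 bad2 bad3 bad4 unfolding P0_def P1_def P2_def P3_def P4_def
    by (intro add_mono) auto
  finally have pc: "prob (space M - E) \<le> (real K - 1) * p + 2 / ((ln (real K))\<^sup>2 - 1 - ln (real K))\<^sup>2
          + 16 / (u\<^sup>2 * (real K - 1)) + 8 * p" by simp
  have pE: "prob E = 1 - prob (space M - E)" using prob_compl[OF Em] by simp
  show ?thesis
  proof (rule bexI[where x=E], rule conjI, rule ballI)
    show "E \<in> events" by (rule Em)
    have a1: "(real K - 1) * p \<le> real K * p" using p01 by (simp add: algebra_simps)
    have a2: "2 / ((ln (real K))\<^sup>2 - 1 - ln (real K))\<^sup>2 \<le> 2 / (ln (real K))\<^sup>2"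
    proof -
      have l3: "3 * ln (real K) \<le> ln (real K) * ln (real K)" using lnK by (intro mult_right_mono) auto
      have "ln (real K) \<le> (ln (real K))\<^sup>2 - 1 - ln (real K)" unfolding power2_eq_square using l3 lnK by linarith
      then have "(ln (real K))\<^sup>2 \<le> ((ln (real K))\<^sup>2 - 1 - ln (real K))\<^sup>2" using lnK by (intro power_mono) auto
      moreover have l0: "0 < (ln (real K))\<^sup>2" using lnK by simp
      ultimately have "0 < ((ln (real K))\<^sup>2 - 1 - ln (real K))\<^sup>2" by linarith
      with l0 \<open>(ln (real K))\<^sup>2 \<le> ((ln (real K))\<^sup>2 - 1 - ln (real K))\<^sup>2\<close> show ?thesis
        by (intro divide_left_mono mult_pos_pos) auto
    qed
    have a3: "16 / (u\<^sup>2 * (real K - 1)) \<le> 32 * u"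
    proof -
      have "u\<^sup>2 * (real K - 1) = 1 / u - u\<^sup>2" using u2K by (simp add: algebra_simps)
      moreover have "u\<^sup>2 \<le> 1 / (2 * u)"
      proof -
        have "u ^ 3 \<le> 1/2" using u3 K8 by simp
        then show ?thesis using uf by (simp add: field_simps power3_eq_cube power2_eq_square)
      qed
      ultimately have b: "1 / (2 * u) \<le> u\<^sup>2 * (real K - 1)" using uf by (simp add: field_simps)
      have p1: "0 < 1 / (2 * u)" using uf by simp
      have "16 / (u\<^sup>2 * (real K - 1)) \<le> 16 / (1 / (2 * u))"
        using b p1 K2 by (intro divide_left_mono mult_pos_pos) auto
      also have "\<dots> = 32 * u" by simp
      finally show ?thesis .
    qed
    show "1 - (real K * p + 2 / (ln (real K))\<^sup>2 + 32 * real K powr (-1/3) + 8 * p) \<le> prob E"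
      using pc pE a1 a2 a3 unfolding u_def by linarith
  next
    fix \<omega> assume \<omega>E: "\<omega> \<in> E"
    then have \<omega>: "\<omega> \<in> space M" and p0: "P0 \<omega>" and p1: "P1 \<omega>" and p2: "P2 \<omega>" and p3: "P3 \<omega>" and p4: "P4 \<omega>"
      unfolding E_def by auto
    have h0: "\<And>j. 1 \<le> j \<Longrightarrow> 0 \<le> H j \<omega>" using p0 unfolding P0_def H'_def by auto
    have c01: "\<And>j. 2 \<le> j \<Longrightarrow> C j \<omega> = 0 \<or> C j \<omega> = 1" using clone_vals \<omega> by auto
    have c0: "\<And>j. j \<in> {2..K} \<Longrightarrow> C j \<omega> = 0" using p1 unfolding P1_def C'_def by auto
    have G3: "\<And>m. K \<le> m \<Longrightarrow> \<bar>\<Sum>j\<in>{K..<m}. (H j \<omega> - 1 / real j)\<bar> < u / 4"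
    proof -
      fix m assume "K \<le> m"
      then have "\<bar>\<Sum>j\<in>{K..<m}. X j \<omega>\<bar> < u / 4" using p3 unfolding P3_def by auto
      moreover have "(\<Sum>j\<in>{K..<m}. X j \<omega>) = (\<Sum>j\<in>{K..<m}. (H j \<omega> - 1 / real j))"
        using K1 by (intro sum.cong) (auto simp: X_def)
      ultimately show "\<bar>\<Sum>j\<in>{K..<m}. (H j \<omega> - 1 / real j)\<bar> < u / 4" by simp
    qed
    have G4: "\<And>m. K \<le> m \<Longrightarrow> (\<Sum>j\<in>{2..m}. C j \<omega>) \<le> u * real m"
    proof -
      fix m assume "K \<le> m"
      then have "(\<Sum>j\<in>{2..m}. C' j \<omega>) \<le> u * real m" using p4 unfolding P4_def by auto
      moreover have "(\<Sum>j\<in>{2..m}. C' j \<omega>) = (\<Sum>j\<in>{2..m}. C j \<omega>)"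
        by (intro sum.cong) (auto simp: C'_def)
      ultimately show "(\<Sum>j\<in>{2..m}. C j \<omega>) \<le> u * real m" by simp
    qed
    have bt: "birth_time (\<lambda>j. H' j \<omega>) K = birth_time (\<lambda>j. H j \<omega>) K"
      unfolding birth_time_def by (intro sum.cong) (auto simp: H'_def)
    note dm = det_main[OF K8 u_def h0 c01 c0 G3 G4]
    show "ereal (birth_time (\<lambda>j. H j \<omega>) K) = type_birth (\<lambda>j. H j \<omega>) (\<lambda>j. C j \<omega>) K
     \<and> birth_time (\<lambda>j. H j \<omega>) K \<le> (ln (real K))\<^sup>2
     \<and> (\<forall>t\<ge>0.
          (1 - real K powr (-1/3)) * real K * exp t
            \<le> real (yule_pop (\<lambda>j. H j \<omega>) (birth_time (\<lambda>j. H j \<omega>) K + t))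
        \<and> real (yule_pop (\<lambda>j. H j \<omega>) (birth_time (\<lambda>j. H j \<omega>) K + t))
            \<le> (1 + real K powr (-1/3)) * real K * exp t)
     \<and> (\<forall>t\<ge>0.
          (1 - 3 * real K powr (-1/3)) * real K * exp t
            \<le> real (num_types (\<lambda>j. H j \<omega>) (\<lambda>j. C j \<omega>)
                     (real_of_ereal (type_birth (\<lambda>j. H j \<omega>) (\<lambda>j. C j \<omega>) K) + t))
        \<and> real (num_types (\<lambda>j. H j \<omega>) (\<lambda>j. C j \<omega>)
                     (real_of_ereal (type_birth (\<lambda>j. H j \<omega>) (\<lambda>j. C j \<omega>) K) + t))
            \<le> (1 + 3 * real K powr (-1/3)) * real K * exp t)"
      using dm p2 bt unfolding P2_def u_def by simp
  qed
qed

end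


theorem lemma3p1:
  fixes M :: "nat \<Rightarrow> 'a measure"
    and H :: "nat \<Rightarrow> nat \<Rightarrow> 'a \<Rightarrow> real"
    and C :: "nat \<Rightarrow> nat \<Rightarrow> 'a \<Rightarrow> real"
    and p :: "nat \<Rightarrow> real" and k :: "nat \<Rightarrow> nat"
  assumes p_range: "\<And>n. 0 \<le> p n \<and> p n \<le> 1"
    and p_lim: "p \<longlonglongrightarrow> 0"
    and k_lim: "filterlim k at_top sequentially"
    and kp_lim: "(\<lambda>n. real (k n) * p n) \<longlonglongrightarrow> 0"
    and prob: "\<And>n. prob_space (M n)"
    and indep: "\<And>n. prob_space.indep_vars (M n) (\<lambda>_. borel)
                  (\<lambda>i. case i of Inl j \<Rightarrow> H n j | Inr j \<Rightarrow> C n j)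
                  (Inl ` {1..} \<union> Inr ` {2..})"
    and hold_exp: "\<And>n j. 1 \<le> j \<Longrightarrow>
                  distributed (M n) lborel (H n j) (exponential_density (real j))"
    and clone_vals: "\<And>n j \<omega>. 2 \<le> j \<Longrightarrow> \<omega> \<in> space (M n) \<Longrightarrow> C n j \<omega> \<in> {0, 1}"
    and clone_prob: "\<And>n j. 2 \<le> j \<Longrightarrow>
                  measure (M n) {\<omega> \<in> space (M n). C n j \<omega> = 1} = p n"
  shows "\<exists>E. (\<forall>n. E n \<in> sets (M n))
           \<and> (\<lambda>n. measure (M n) (E n)) \<longlonglongrightarrow> 1
           \<and> (\<forall>n. \<forall>\<omega>\<in>E n.
                 ereal (birth_time (\<lambda>j. H n j \<omega>) (k n)) = type_birth (\<lambda>j. H n j \<omega>) (\<lambda>j. C n j \<omega>) (k n)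
               \<and> birth_time (\<lambda>j. H n j \<omega>) (k n) \<le> (ln (real (k n)))\<^sup>2
               \<and> (\<forall>t\<ge>0.
                    (1 - real (k n) powr (-1/3)) * real (k n) * exp t
                      \<le> real (yule_pop (\<lambda>j. H n j \<omega>) (birth_time (\<lambda>j. H n j \<omega>) (k n) + t))
                  \<and> real (yule_pop (\<lambda>j. H n j \<omega>) (birth_time (\<lambda>j. H n j \<omega>) (k n) + t))
                      \<le> (1 + real (k n) powr (-1/3)) * real (k n) * exp t)
               \<and> (\<forall>t\<ge>0.
                    (1 - 3 * real (k n) powr (-1/3)) * real (k n) * exp t
                      \<le> real (num_types (\<lambda>j. H n j \<omega>) (\<lambda>j. C n j \<omega>)
                               (real_of_ereal (type_birth (\<lambda>j. H n j \<omega>) (\<lambda>j. C n j \<omega>) (k n)) + t))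
                  \<and> real (num_types (\<lambda>j. H n j \<omega>) (\<lambda>j. C n j \<omega>)
                               (real_of_ereal (type_birth (\<lambda>j. H n j \<omega>) (\<lambda>j. C n j \<omega>) (k n)) + t))
                      \<le> (1 + 3 * real (k n) powr (-1/3)) * real (k n) * exp t))"
proof -
  define cond where "cond n \<longleftrightarrow> 8 \<le> k n \<and> 3 \<le> ln (real (k n)) \<and> real (k n) * p n \<le> 1/4" for n
  define bnd where "bnd n = real (k n) * p n + 2 / (ln (real (k n)))\<^sup>2 + 32 * real (k n) powr (-1/3) + 8 * p n" for n
  have ex: "\<forall>n. \<exists>E. E \<in> sets (M n) \<and> (cond n \<longrightarrow> 1 - bnd n \<le> measure (M n) E) \<and> (\<forall>\<omega>\<in>E.
                 ereal (birth_time (\<lambda>j. H n j \<omega>) (k n)) = type_birth (\<lambda>j. H n j \<omega>) (\<lambda>j. C n j \<omega>) (k n)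
               \<and> birth_time (\<lambda>j. H n j \<omega>) (k n) \<le> (ln (real (k n)))\<^sup>2
               \<and> (\<forall>t\<ge>0.
                    (1 - real (k n) powr (-1/3)) * real (k n) * exp t
                      \<le> real (yule_pop (\<lambda>j. H n j \<omega>) (birth_time (\<lambda>j. H n j \<omega>) (k n) + t))
                  \<and> real (yule_pop (\<lambda>j. H n j \<omega>) (birth_time (\<lambda>j. H n j \<omega>) (k n) + t))
                      \<le> (1 + real (k n) powr (-1/3)) * real (k n) * exp t)
               \<and> (\<forall>t\<ge>0.
                    (1 - 3 * real (k n) powr (-1/3)) * real (k n) * exp t
                      \<le> real (num_types (\<lambda>j. H n j \<omega>) (\<lambda>j. C n j \<omega>)
                               (real_of_ereal (type_birth (\<lambda>j. H n j \<omega>) (\<lambda>j. C n j \<omega>) (k n)) + t))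
                  \<and> real (num_types (\<lambda>j. H n j \<omega>) (\<lambda>j. C n j \<omega>)
                               (real_of_ereal (type_birth (\<lambda>j. H n j \<omega>) (\<lambda>j. C n j \<omega>) (k n)) + t))
                      \<le> (1 + 3 * real (k n) powr (-1/3)) * real (k n) * exp t))"
  proof
    fix n
    show "\<exists>E. E \<in> sets (M n) \<and> (cond n \<longrightarrow> 1 - bnd n \<le> measure (M n) E) \<and> (\<forall>\<omega>\<in>E.
                 ereal (birth_time (\<lambda>j. H n j \<omega>) (k n)) = type_birth (\<lambda>j. H n j \<omega>) (\<lambda>j. C n j \<omega>) (k n)
               \<and> birth_time (\<lambda>j. H n j \<omega>) (k n) \<le> (ln (real (k n)))\<^sup>2
               \<and> (\<forall>t\<ge>0.
                    (1 - real (k n) powr (-1/3)) * real (k n) * exp t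
                      \<le> real (yule_pop (\<lambda>j. H n j \<omega>) (birth_time (\<lambda>j. H n j \<omega>) (k n) + t))
                  \<and> real (yule_pop (\<lambda>j. H n j \<omega>) (birth_time (\<lambda>j. H n j \<omega>) (k n) + t))
                      \<le> (1 + real (k n) powr (-1/3)) * real (k n) * exp t)
               \<and> (\<forall>t\<ge>0.
                    (1 - 3 * real (k n) powr (-1/3)) * real (k n) * exp t
                      \<le> real (num_types (\<lambda>j. H n j \<omega>) (\<lambda>j. C n j \<omega>)
                               (real_of_ereal (type_birth (\<lambda>j. H n j \<omega>) (\<lambda>j. C n j \<omega>) (k n)) + t))
                  \<and> real (num_types (\<lambda>j. H n j \<omega>) (\<lambda>j. C n j \<omega>)
                               (real_of_ereal (type_birth (\<lambda>j. H n j \<omega>) (\<lambda>j. C n j \<omega>) (k n)) + t))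
                      \<le> (1 + 3 * real (k n) powr (-1/3)) * real (k n) * exp t))"
    proof (cases "cond n")
      case True
      interpret yule_setup "M n" "H n" "C n" "p n" "k n"
        by (intro yule_setup.intro yule_setup_axioms.intro prob)
          (use p_range indep hold_exp clone_vals clone_prob True in \<open>auto simp: cond_def\<close>)
      from good_event obtain E where "E \<in> sets (M n)" and "(\<forall>\<omega>\<in>E.
                 ereal (birth_time (\<lambda>j. H n j \<omega>) (k n)) = type_birth (\<lambda>j. H n j \<omega>) (\<lambda>j. C n j \<omega>) (k n)
               \<and> birth_time (\<lambda>j. H n j \<omega>) (k n) \<le> (ln (real (k n)))\<^sup>2
               \<and> (\<forall>t\<ge>0.
                    (1 - real (k n) powr (-1/3)) * real (k n) * exp t
                      \<le> real (yule_pop (\<lambda>j. H n j \<omega>) (birth_time (\<lambda>j. H n j \<omega>) (k n) + t))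
                  \<and> real (yule_pop (\<lambda>j. H n j \<omega>) (birth_time (\<lambda>j. H n j \<omega>) (k n) + t))
                      \<le> (1 + real (k n) powr (-1/3)) * real (k n) * exp t)
               \<and> (\<forall>t\<ge>0.
                    (1 - 3 * real (k n) powr (-1/3)) * real (k n) * exp t
                      \<le> real (num_types (\<lambda>j. H n j \<omega>) (\<lambda>j. C n j \<omega>)
                               (real_of_ereal (type_birth (\<lambda>j. H n j \<omega>) (\<lambda>j. C n j \<omega>) (k n)) + t))
                  \<and> real (num_types (\<lambda>j. H n j \<omega>) (\<lambda>j. C n j \<omega>)
                               (real_of_ereal (type_birth (\<lambda>j. H n j \<omega>) (\<lambda>j. C n j \<omega>) (k n)) + t))
                      \<le> (1 + 3 * real (k n) powr (-1/3)) * real (k n) * exp t))"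
        and "1 - bnd n \<le> measure (M n) E"
        unfolding bnd_def by blast
      then show ?thesis by blast
    next
      case False
      then show ?thesis by (intro exI[of _ "{}"]) auto
    qed
  qed
  from choice[OF ex] obtain E where E: "\<forall>n. E n \<in> sets (M n) \<and> (cond n \<longrightarrow> 1 - bnd n \<le> measure (M n) (E n)) \<and> (\<forall>\<omega>\<in>E n.
                 ereal (birth_time (\<lambda>j. H n j \<omega>) (k n)) = type_birth (\<lambda>j. H n j \<omega>) (\<lambda>j. C n j \<omega>) (k n)
               \<and> birth_time (\<lambda>j. H n j \<omega>) (k n) \<le> (ln (real (k n)))\<^sup>2
               \<and> (\<forall>t\<ge>0.
                    (1 - real (k n) powr (-1/3)) * real (k n) * exp t
                      \<le> real (yule_pop (\<lambda>j. H n j \<omega>) (birth_time (\<lambda>j. H n j \<omega>) (k n) + t))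
                  \<and> real (yule_pop (\<lambda>j. H n j \<omega>) (birth_time (\<lambda>j. H n j \<omega>) (k n) + t))
                      \<le> (1 + real (k n) powr (-1/3)) * real (k n) * exp t)
               \<and> (\<forall>t\<ge>0.
                    (1 - 3 * real (k n) powr (-1/3)) * real (k n) * exp t
                      \<le> real (num_types (\<lambda>j. H n j \<omega>) (\<lambda>j. C n j \<omega>)
                               (real_of_ereal (type_birth (\<lambda>j. H n j \<omega>) (\<lambda>j. C n j \<omega>) (k n)) + t))
                  \<and> real (num_types (\<lambda>j. H n j \<omega>) (\<lambda>j. C n j \<omega>)
                               (real_of_ereal (type_birth (\<lambda>j. H n j \<omega>) (\<lambda>j. C n j \<omega>) (k n)) + t))
                      \<le> (1 + 3 * real (k n) powr (-1/3)) * real (k n) * exp t))"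
    by blast
  have kr: "filterlim (\<lambda>n. real (k n)) at_top sequentially"
    by (rule filterlim_compose[OF filterlim_real_sequentially k_lim])
  have lk: "filterlim (\<lambda>n. ln (real (k n))) at_top sequentially"
    by (rule filterlim_compose[OF ln_at_top kr])
  have ev: "eventually cond sequentially"
  proof -
    have e1: "eventually (\<lambda>n. 8 \<le> k n) sequentially" using k_lim unfolding filterlim_at_top by blast
    have e2: "eventually (\<lambda>n. 3 \<le> ln (real (k n))) sequentially" using lk unfolding filterlim_at_top by blast
    have e3: "eventually (\<lambda>n. real (k n) * p n < 1/4) sequentially"
      by (rule order_tendstoD(2)[OF kp_lim]) simp
    show ?thesis using e1 e2 e3 unfolding cond_def by eventually_elim auto
  qed
  have t2: "(\<lambda>n. 2 / (ln (real (k n)))\<^sup>2) \<longlonglongrightarrow> 0"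
  proof -
    have i: "(\<lambda>n. inverse (ln (real (k n)))) \<longlonglongrightarrow> 0" by (rule tendsto_inverse_0_at_top[OF lk])
    have "(\<lambda>n. 2 * (inverse (ln (real (k n))) * inverse (ln (real (k n))))) \<longlonglongrightarrow> 2 * (0 * 0)"
      by (intro tendsto_mult tendsto_const i)
    moreover have "(\<lambda>n. 2 * (inverse (ln (real (k n))) * inverse (ln (real (k n))))) = (\<lambda>n. 2 / (ln (real (k n)))\<^sup>2)"
      by (simp add: fun_eq_iff divide_inverse power2_eq_square)
    ultimately show ?thesis by simp
  qed
  have t3: "(\<lambda>n. real (k n) powr (-1/3)) \<longlonglongrightarrow> 0"
    by (rule tendsto_neg_powr[OF _ kr]) simp
  have "bnd \<longlonglongrightarrow> 0 + 0 + 32 * 0 + 8 * 0"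
    unfolding bnd_def
    by (intro tendsto_add tendsto_mult tendsto_const kp_lim t2 t3 p_lim)
  then have tb: "bnd \<longlonglongrightarrow> 0" by simp
  have lim: "(\<lambda>n. measure (M n) (E n)) \<longlonglongrightarrow> 1"
  proof (rule tendsto_sandwich[of "\<lambda>n. 1 - bnd n" _ sequentially "\<lambda>n. 1"])
    show "eventually (\<lambda>n. 1 - bnd n \<le> measure (M n) (E n)) sequentially"
      using ev E by (auto elim: eventually_mono)
    show "eventually (\<lambda>n. measure (M n) (E n) \<le> 1) sequentially"
      by (intro always_eventually allI prob_space.prob_le_1[OF prob])
    show "(\<lambda>n. 1 - bnd n) \<longlonglongrightarrow> 1" using tendsto_diff[OF tendsto_const tb, of 1] by simp
  qed simp
  show ?thesis
    using E lim by (intro exI[of _ E]) blast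
qed


end
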